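(* Let $\mathcal E$ be a completely positive trace-preserving map on $M_d$, and let $L\ge1$ be an integer. Regard $\mathcal E^L$ as a linear operator on the $d^2$-dimensional space $M_d$, with trace $\mathrm{Tr}(\mathcal E^L)$; equivalently, this is $\mathrm{Tr}(E^L)$ for the $d^2\times d^2$ transfer matrix $E$ representing $\mathcal E$. Then $$1-d^{5/2}\tau(\mathcal E)^L\le\mathrm{Tr}(\mathcal E^L)\le 1+d^{5/2}\tau(\mathcal E)^L.$$
   Context: $M_d$ is the space of complex $d\times d$ matrices. The ergodicity coefficient is $\tau(\mathcal F):=\sup\{\|\mathcal F(\sigma)\|_1/\|\sigma\|_1:\ 0\ne\sigma\in M_d,\ \mathrm{Tr}\,\sigma=0\}$, where $\|\cdot\|_1$ is the trace norm. *)

theory Defs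
  imports "HOL-Analysis.Analysis" "Jordan_Normal_Form.Matrix" "Jordan_Normal_Form.Conjugate"
begin

text \<open>Complex d x d matrices are represented as Jordan_Normal_Form matrices in carrier_mat d d.
  Super-operators are functions on complex mat; only their behaviour on carrier_mat d d matters.\<close>

definition cmat_trace :: "complex mat \<Rightarrow> complex" where
  "cmat_trace A = (\<Sum>i<dim_row A. A $$ (i,i))"

definition cmat_adjoint :: "complex mat \<Rightarrow> complex mat" where
  "cmat_adjoint A = mat (dim_col A) (dim_row A) (\<lambda>(i,j). cnj (A $$ (j,i)))"

definition psd :: "nat \<Rightarrow> complex mat \<Rightarrow> bool" where
  "psd n A \<longleftrightarrow> A \<in> carrier_mat n n \<and> cmat_adjoint A = A \<and>
     (\<forall>v \<in> carrier_vec n. conjugate v \<bullet> (A *\<^sub>v v) \<ge> 0)"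

definition trace_norm :: "complex mat \<Rightarrow> real" where
  "trace_norm A = Re (cmat_trace
     (THE P. psd (dim_col A) P \<and> P * P = cmat_adjoint A * A))"

definition linear_on_Md :: "nat \<Rightarrow> (complex mat \<Rightarrow> complex mat) \<Rightarrow> bool" where
  "linear_on_Md d E \<longleftrightarrow>
     (\<forall>X \<in> carrier_mat d d. E X \<in> carrier_mat d d) \<and>
     (\<forall>X \<in> carrier_mat d d. \<forall>Y \<in> carrier_mat d d. E (X + Y) = E X + E Y) \<and>
     (\<forall>c. \<forall>X \<in> carrier_mat d d. E (c \<cdot>\<^sub>m X) = c \<cdot>\<^sub>m E X)"

text \<open>The (i,j) d x d block of a (k d) x (k d) matrix, using the identification
  M_k tensor M_d = M_(k d) with index (i,a) mapped to i*d+a.\<close>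
definition block :: "nat \<Rightarrow> complex mat \<Rightarrow> nat \<Rightarrow> nat \<Rightarrow> complex mat" where
  "block d X i j = mat d d (\<lambda>(a,b). X $$ (i*d+a, j*d+b))"

definition id_tensor :: "nat \<Rightarrow> nat \<Rightarrow> (complex mat \<Rightarrow> complex mat) \<Rightarrow> complex mat \<Rightarrow> complex mat" where
  "id_tensor k d E X = mat (k*d) (k*d)
     (\<lambda>(r,c). E (block d X (r div d) (c div d)) $$ (r mod d, c mod d))"

definition completely_positive :: "nat \<Rightarrow> (complex mat \<Rightarrow> complex mat) \<Rightarrow> bool" where
  "completely_positive d E \<longleftrightarrow>
     (\<forall>k X. psd (k*d) X \<longrightarrow> psd (k*d) (id_tensor k d E X))"

definition trace_preserving :: "nat \<Rightarrow> (complex mat \<Rightarrow> complex mat) \<Rightarrow> bool" where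
  "trace_preserving d E \<longleftrightarrow> (\<forall>X \<in> carrier_mat d d. cmat_trace (E X) = cmat_trace X)"

definition CPTP :: "nat \<Rightarrow> (complex mat \<Rightarrow> complex mat) \<Rightarrow> bool" where
  "CPTP d E \<longleftrightarrow> linear_on_Md d E \<and> completely_positive d E \<and> trace_preserving d E"

text \<open>Ergodicity coefficient; the supremum of the empty set (d = 1) is taken to be 0.\<close>
definition ergodicity_coeff :: "nat \<Rightarrow> (complex mat \<Rightarrow> complex mat) \<Rightarrow> real" where
  "ergodicity_coeff d E = Sup (insert 0
     {trace_norm (E \<sigma>) / trace_norm \<sigma> | \<sigma>.
        \<sigma> \<in> carrier_mat d d \<and> \<sigma> \<noteq> 0\<^sub>m d d \<and> cmat_trace \<sigma> = 0})"

definition matrix_unit :: "nat \<Rightarrow> nat \<Rightarrow> nat \<Rightarrow> complex mat" where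
  "matrix_unit d a b = mat d d (\<lambda>(i,j). if i = a \<and> j = b then 1 else 0)"

text \<open>Trace of a linear operator F on M_d, computed in the basis of matrix units
  (= trace of its d^2 x d^2 transfer matrix).\<close>
definition op_trace :: "nat \<Rightarrow> (complex mat \<Rightarrow> complex mat) \<Rightarrow> complex" where
  "op_trace d F = (\<Sum>a<d. \<Sum>b<d. F (matrix_unit d a b) $$ (a,b))"

end

theory Submission
  imports Defs "Jordan_Normal_Form.Schur_Decomposition" "Jordan_Normal_Form.Char_Poly"
begin

abbreviation adj where "adj \<equiv> cmat_adjoint"

lemma adj_carrier[simp]: "A \<in> carrier_mat n m \<Longrightarrow> adj A \<in> carrier_mat m n"
  by (auto simp: cmat_adjoint_def)
lemma adj_dims[simp]: "dim_row (adj A) = dim_col A" "dim_col (adj A) = dim_row A"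
  by (auto simp: cmat_adjoint_def)
lemma adj_index[simp]: "i < dim_col A \<Longrightarrow> j < dim_row A \<Longrightarrow> adj A $$ (i,j) = cnj (A $$ (j,i))"
  by (auto simp: cmat_adjoint_def)
lemma adj_adj[simp]: "adj (adj A) = A"
  by (rule eq_matI) auto

lemma adj_mult: assumes "A \<in> carrier_mat n k" "B \<in> carrier_mat k m"
  shows "adj (A * B) = adj B * adj A"
proof (rule eq_matI)
  fix i j assume ij: "i < dim_row (adj B * adj A)" "j < dim_col (adj B * adj A)"
  then show "adj (A * B) $$ (i, j) = (adj B * adj A) $$ (i, j)"
    using assms by (auto simp: scalar_prod_def row_def col_def cnj_sum mult.commute)
qed (use assms in auto)

lemma adj_add: "A \<in> carrier_mat n m \<Longrightarrow> B \<in> carrier_mat n m \<Longrightarrow> adj (A + B) = adj A + adj B"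
  by (rule eq_matI) auto
lemma adj_minus: "A \<in> carrier_mat n m \<Longrightarrow> B \<in> carrier_mat n m \<Longrightarrow> adj (A - B) = adj A - adj B"
  by (rule eq_matI) auto
lemma adj_smult: "adj (c \<cdot>\<^sub>m A) = cnj c \<cdot>\<^sub>m adj A"
  by (rule eq_matI) auto
lemma adj_one[simp]: "adj (1\<^sub>m n) = 1\<^sub>m n"
  by (rule eq_matI) auto
lemma adj_zero[simp]: "adj (0\<^sub>m n m) = 0\<^sub>m m n"
  by (rule eq_matI) auto

lemma sprod_adj: assumes A: "A \<in> carrier_mat n m" and v: "v \<in> carrier_vec n" and w: "w \<in> carrier_vec m"
  shows "conjugate v \<bullet> (A *\<^sub>v w) = conjugate (adj A *\<^sub>v v) \<bullet> w"
proof -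
  have "conjugate v \<bullet> (A *\<^sub>v w) = (\<Sum>i<n. cnj (v$i) * (\<Sum>j<m. A$$(i,j) * w$j))"
    using A v w by (auto simp: scalar_prod_def mult_mat_vec_def row_def atLeast0LessThan)
  also have "\<dots> = (\<Sum>j<m. (\<Sum>i<n. cnj (v$i) * A$$(i,j)) * w$j)"
    by (simp add: sum_distrib_left sum_distrib_right mult.assoc) (rule sum.swap)
  also have "\<dots> = conjugate (adj A *\<^sub>v v) \<bullet> w"
    using A v w by (auto simp: scalar_prod_def mult_mat_vec_def row_def atLeast0LessThan cnj_sum
        mult.commute intro!: sum.cong)
  finally show ?thesis .
qed

lemma trace_comm: assumes "A \<in> carrier_mat n m" "B \<in> carrier_mat m n"
  shows "cmat_trace (A * B) = cmat_trace (B * A)"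
proof -
  have "cmat_trace (A * B) = (\<Sum>i<n. \<Sum>k<m. A$$(i,k) * B$$(k,i))"
    using assms by (auto simp: cmat_trace_def scalar_prod_def row_def col_def atLeast0LessThan)
  also have "\<dots> = (\<Sum>k<m. \<Sum>i<n. B$$(k,i) * A$$(i,k))"
    by (subst sum.swap) (simp add: mult.commute)
  also have "\<dots> = cmat_trace (B * A)"
    using assms by (auto simp: cmat_trace_def scalar_prod_def row_def col_def atLeast0LessThan)
  finally show ?thesis .
qed

lemma trace_add: "A \<in> carrier_mat n n \<Longrightarrow> B \<in> carrier_mat n n \<Longrightarrow> cmat_trace (A + B) = cmat_trace A + cmat_trace B"
  by (auto simp: cmat_trace_def sum.distrib)
lemma trace_minus: "A \<in> carrier_mat n n \<Longrightarrow> B \<in> carrier_mat n n \<Longrightarrow> cmat_trace (A - B) = cmat_trace A - cmat_trace B"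
  by (auto simp: cmat_trace_def sum_subtractf)
lemma trace_smult: "A \<in> carrier_mat n n \<Longrightarrow> cmat_trace (c \<cdot>\<^sub>m A) = c * cmat_trace A"
  by (auto simp: cmat_trace_def sum_distrib_left)
lemma trace_one: "cmat_trace (1\<^sub>m n) = of_nat n"
  by (auto simp: cmat_trace_def)

lemma trace_AadjA: assumes "A \<in> carrier_mat n m"
  shows "cmat_trace (adj A * A) = of_real (\<Sum>i<m. \<Sum>k<n. (cmod (A$$(k,i)))^2)"
  using assms by (auto simp: cmat_trace_def scalar_prod_def row_def col_def atLeast0LessThan
      complex_norm_square mult.commute intro!: sum.cong) (metis complex_norm_square of_real_power)

definition qf :: "complex mat \<Rightarrow> complex vec \<Rightarrow> complex" where
  "qf A v = conjugate v \<bullet> (A *\<^sub>v v)"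

lemma sprod_conj_sum: fixes v w :: "complex vec" shows "v \<in> carrier_vec n \<Longrightarrow> w \<in> carrier_vec n \<Longrightarrow>
   conjugate v \<bullet> w = (\<Sum>i<n. cnj (v$i) * w$i)"
  by (auto simp: scalar_prod_def atLeast0LessThan)

lemma cnj_sprod: fixes v w :: "complex vec" shows "v \<in> carrier_vec n \<Longrightarrow> w \<in> carrier_vec n \<Longrightarrow>
   cnj (conjugate v \<bullet> w) = conjugate w \<bullet> v"
  by (simp add: sprod_conj_sum cnj_sum mult.commute)

lemma cmod_sq: "(complex_of_real (cmod z))^2 = z * cnj z"
  by (metis complex_norm_square of_real_power)

lemma sprod_self: fixes v :: "complex vec" shows "v \<in> carrier_vec n \<Longrightarrow> conjugate v \<bullet> v = of_real (\<Sum>i<n. (cmod (v$i))^2)"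
  by (simp add: sprod_conj_sum cmod_sq mult.commute)

lemma sprod_self_zero: fixes v :: "complex vec" shows "v \<in> carrier_vec n \<Longrightarrow> conjugate v \<bullet> v = 0 \<longleftrightarrow> v = 0\<^sub>v n"
proof
  assume v: "v \<in> carrier_vec n" and "conjugate v \<bullet> v = 0"
  then have "complex_of_real (\<Sum>i<n. (cmod (v$i))^2) = 0" by (simp only: sprod_self[OF v])
  then have "(\<Sum>i<n. (cmod (v$i))^2) = 0" by (simp only: of_real_eq_0_iff)
  then have "\<forall>i<n. (cmod (v$i))^2 = 0" by (subst (asm) sum_nonneg_eq_0_iff) auto
  then show "v = 0\<^sub>v n" using v by (intro eq_vecI) auto
qed auto

lemma qf_adj: assumes "A \<in> carrier_mat n n" "adj A = A" "v \<in> carrier_vec n" "w \<in> carrier_vec n"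
  shows "conjugate v \<bullet> (A *\<^sub>v w) = conjugate (A *\<^sub>v v) \<bullet> w"
  using sprod_adj[OF assms(1,3,4)] assms(2) by simp

lemma herm_qf_real: assumes "A \<in> carrier_mat n n" "adj A = A" "v \<in> carrier_vec n"
  shows "cnj (qf A v) = qf A v"
proof -
  have "cnj (qf A v) = conjugate (A *\<^sub>v v) \<bullet> v"
    unfolding qf_def using assms by (subst cnj_sprod[of _ n]) auto
  also have "\<dots> = qf A v" unfolding qf_def using qf_adj[OF assms assms(3)] by simp
  finally show ?thesis .
qed

lemma psd_qf: "psd n A \<Longrightarrow> v \<in> carrier_vec n \<Longrightarrow> qf A v \<ge> 0"
  unfolding psd_def qf_def by auto

lemma herm_eigen_real: assumes "A \<in> carrier_mat n n" "adj A = A" "v \<in> carrier_vec n" "v \<noteq> 0\<^sub>v n"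
  "A *\<^sub>v v = \<mu> \<cdot>\<^sub>v v" shows "cnj \<mu> = \<mu>"
proof -
  have q: "qf A v = \<mu> * (conjugate v \<bullet> v)" using assms unfolding qf_def by simp
  have r: "cnj (conjugate v \<bullet> v) = conjugate v \<bullet> v" "conjugate v \<bullet> v \<noteq> 0"
    using assms cnj_sprod sprod_self_zero by blast+
  have "cnj \<mu> * (conjugate v \<bullet> v) = \<mu> * (conjugate v \<bullet> v)"
    using herm_qf_real[OF assms(1-3)] q r(1) by (metis complex_cnj_mult)
  then show ?thesis using r(2) by simp
qed

lemma herm_nonzero_eigen: assumes A: "A \<in> carrier_mat n n" and h: "adj A = A" and nz: "A \<noteq> 0\<^sub>m n n"
  shows "\<exists>\<mu> v. \<mu> \<noteq> 0 \<and> v \<in> carrier_vec n \<and> v \<noteq> 0\<^sub>v n \<and> A *\<^sub>v v = \<mu> \<cdot>\<^sub>v v"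
proof -
  obtain es where cp: "char_poly A = (\<Prod>a\<leftarrow>es. [:- a, 1:])" and len: "length es = n"
    using char_poly_factorized[OF A] by blast
  obtain B P Q where sd: "schur_decomposition A es = (B,P,Q)" by (metis prod_cases3)
  from schur_decomposition[OF A cp sd] have sim: "similar_mat_wit A B P Q"
    and ut: "upper_triangular B" and dg: "diag_mat B = es" by auto
  from sim A have B: "B \<in> carrier_mat n n" and P: "P \<in> carrier_mat n n" and Q: "Q \<in> carrier_mat n n"
    and PQ: "P * Q = 1\<^sub>m n" and QP: "Q * P = 1\<^sub>m n" and APBQ: "A = P * B * Q"
    unfolding similar_mat_wit_def Let_def by auto
  show ?thesis
  proof (cases "\<exists>e\<in>set es. e \<noteq> 0")
    case True
    then obtain e where e: "e \<in> set es" "e \<noteq> 0" by auto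
    have "poly (char_poly A) e = 0" unfolding cp poly_prod_list
      using e(1) by (auto simp: prod_list_zero_iff)
    then have "eigenvalue A e" using eigenvalue_root_char_poly[OF A] by simp
    then show ?thesis using e A unfolding eigenvalue_def eigenvector_def by auto
  next
    case False
    then have d0: "\<And>i. i < n \<Longrightarrow> B $$ (i,i) = 0"
      using dg B len unfolding diag_mat_def by (metis (no_types, lifting) carrier_matD(1) diff_zero
          length_map length_upt nth_map_upt nth_mem add_0)
    have tB: "cmat_trace (B * B) = 0"
    proof -
      have "cmat_trace (B * B) = (\<Sum>i<n. \<Sum>k<n. B$$(i,k) * B$$(k,i))"
        using B by (auto simp: cmat_trace_def scalar_prod_def row_def col_def atLeast0LessThan)
      also have "\<dots> = 0"
      proof (intro sum.neutral ballI)
        fix i k assume "i \<in> {..<n}" "k \<in> {..<n}"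
        then show "B$$(i,k) * B$$(k,i) = 0"
          using ut B d0 by (cases "k < i"; cases "i < k") (auto simp: upper_triangular_def)
      qed
      finally show ?thesis .
    qed
    have "A * A = P * (B * B * Q)"
    proof -
      have "A * A = P * B * Q * (P * B * Q)" using APBQ by simp
      also have "\<dots> = P * B * (Q * P) * B * Q" using P B Q by (simp add: assoc_mult_mat[of _ n n _ n _ n])
      also have "\<dots> = P * (B * B * Q)" using P B Q QP by (simp add: assoc_mult_mat[of _ n n _ n _ n])
      finally show ?thesis .
    qed
    then have "cmat_trace (A * A) = cmat_trace (B * B * Q * P)"
      using trace_comm[of P n n "B * B * Q"] P B Q by simp
    also have "\<dots> = cmat_trace (B * B)" using P B Q QP by (simp add: assoc_mult_mat[of _ n n _ n _ n])
    finally have "cmat_trace (adj A * A) = 0" using tB h by simp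
    then have "complex_of_real (\<Sum>i<n. \<Sum>k<n. (cmod (A$$(k,i)))^2) = 0" using trace_AadjA[OF A] by metis
    then have "(\<Sum>i<n. \<Sum>k<n. (cmod (A$$(k,i)))^2) = 0" by (simp only: of_real_eq_0_iff)
    then have "\<forall>i<n. (\<Sum>k<n. (cmod (A$$(k,i)))^2) = 0"
      by (subst (asm) sum_nonneg_eq_0_iff) (auto intro: sum_nonneg)
    then have "\<forall>i<n. \<forall>k<n. (cmod (A$$(k,i)))^2 = 0"
      by (metis (no_types, lifting) finite_lessThan lessThan_iff sum_nonneg_eq_0_iff zero_le_power2)
    then have "A = 0\<^sub>m n n" using A by (intro eq_matI) auto
    with nz show ?thesis by simp
  qed
qed

lemma complex_nonneg: "(0::complex) \<le> z \<longleftrightarrow> Im z = 0 \<and> Re z \<ge> 0"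
  by (auto simp: less_eq_complex_def)

lemma real_quad_nonneg_zero: fixes a b :: real
  assumes b: "b \<ge> 0" and q: "\<And>t. 2 * t * a + t^2 * b \<ge> 0" shows "a = 0"
proof (rule ccontr)
  assume a: "a \<noteq> 0"
  define t where "t = - a / (b + 1)"
  have ne: "b + 1 \<noteq> 0" using b by simp
  have s: "t * (b+1) = -a" unfolding t_def using ne by simp
  have "(b+1)^2 * (2 * t * a + t^2 * b) = 2 * a * (t*(b+1)) * (b+1) + (t*(b+1))^2 * b"
    by (simp add: algebra_simps power2_eq_square)
  also have "\<dots> = -(a^2 * (b + 2))" by (simp only: s) (simp add: algebra_simps power2_eq_square)
  finally have "(b+1)^2 * (2 * t * a + t^2 * b) = -(a^2 * (b + 2))" .
  moreover have "a^2 > 0" using a by simp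
  then have "a^2 * (b + 2) > 0" using b by simp
  moreover have "(b+1)^2 * (2 * t * a + t^2 * b) \<ge> 0" using q[of t] b by simp
  ultimately show False by linarith
qed

lemma psd_qf_zero: assumes P: "psd n P" and v: "v \<in> carrier_vec n" and z: "qf P v = 0"
  shows "P *\<^sub>v v = 0\<^sub>v n"
proof -
  have Pc: "P \<in> carrier_mat n n" and h: "adj P = P" using P by (auto simp: psd_def)
  define w where "w = P *\<^sub>v v"
  have w: "w \<in> carrier_vec n" using Pc v unfolding w_def by auto
  define a where "a = conjugate w \<bullet> w"
  define b where "b = qf P w"
  have b0: "b \<ge> 0" unfolding b_def using psd_qf[OF P w] .
  have a_r: "a = of_real (\<Sum>i<n. (cmod (w$i))^2)" unfolding a_def using sprod_self[OF w] .
  have q: "2 * t * Re a + t^2 * Re b \<ge> 0" for t :: real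
  proof -
    define u where "u = v + complex_of_real t \<cdot>\<^sub>v w"
    have u: "u \<in> carrier_vec n" using v w unfolding u_def by auto
    have "qf P u = (\<Sum>i<n. cnj (v$i + of_real t * w$i) * ((P *\<^sub>v v)$i + of_real t * (P *\<^sub>v w)$i))"
      unfolding qf_def u_def using v w Pc
      by (subst sprod_conj_sum[of _ n]) (auto simp: mult_add_distrib_mat_vec mult_mat_vec)
    also have "\<dots> = (\<Sum>i<n. cnj (v$i) * (P *\<^sub>v v)$i + of_real t * (cnj (v$i) * (P *\<^sub>v w)$i)
       + of_real t * (cnj (w$i) * (P *\<^sub>v v)$i) + (of_real t)^2 * (cnj (w$i) * (P *\<^sub>v w)$i))"
      by (rule sum.cong) (simp_all add: ring_distribs power2_eq_square mult.assoc mult.left_commute)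
    also have "\<dots> = (\<Sum>i<n. cnj (v$i) * (P *\<^sub>v v)$i) + of_real t * (\<Sum>i<n. cnj (v$i) * (P *\<^sub>v w)$i)
       + of_real t * (\<Sum>i<n. cnj (w$i) * (P *\<^sub>v v)$i) + (of_real t)^2 * (\<Sum>i<n. cnj (w$i) * (P *\<^sub>v w)$i)"
      by (simp only: sum.distrib sum_distrib_left)
    also have "(\<Sum>i<n. cnj (v$i) * (P *\<^sub>v v)$i) = qf P v"
      unfolding qf_def using v Pc by (subst sprod_conj_sum[of _ n]) auto
    also have "(\<Sum>i<n. cnj (v$i) * (P *\<^sub>v w)$i) = a"
    proof -
      have "(\<Sum>i<n. cnj (v$i) * (P *\<^sub>v w)$i) = conjugate v \<bullet> (P *\<^sub>v w)"
        using v w Pc by (subst sprod_conj_sum[of _ n]) auto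
      also have "\<dots> = a" unfolding a_def w_def using qf_adj[OF Pc h v] w w_def by auto
      finally show ?thesis .
    qed
    also have "(\<Sum>i<n. cnj (w$i) * (P *\<^sub>v v)$i) = a"
      unfolding a_def w_def using v Pc by (subst sprod_conj_sum[of _ n]) auto
    also have "(\<Sum>i<n. cnj (w$i) * (P *\<^sub>v w)$i) = b"
      unfolding b_def qf_def using w Pc by (subst sprod_conj_sum[of _ n]) auto
    finally have "qf P u = 2 * of_real t * a + (of_real t)^2 * b" using z by simp
    moreover have "qf P u \<ge> 0" using psd_qf[OF P u] .
    ultimately have "0 \<le> Re (2 * of_real t * a + (of_real t)^2 * b)" by (simp add: complex_nonneg)
    then show ?thesis using b0 a_r by (simp add: complex_nonneg power2_eq_square)
  qed
  have "Re a = 0" using real_quad_nonneg_zero[of "Re b" "Re a"] q b0 by (simp add: complex_nonneg)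
  then have "a = 0" using a_r by simp
  then show ?thesis unfolding a_def w_def using sprod_self_zero Pc v by (metis mult_mat_vec_carrier)
qed

lemma psd_sqrt_unique: assumes P: "psd n P" and Q: "psd n Q" and PQ: "P * P = Q * Q"
  shows "P = Q"
proof (rule ccontr)
  assume ne: "P \<noteq> Q"
  have Pc: "P \<in> carrier_mat n n" and hP: "adj P = P" using P by (auto simp: psd_def)
  have Qc: "Q \<in> carrier_mat n n" and hQ: "adj Q = Q" using Q by (auto simp: psd_def)
  define D where "D = P - Q"
  have Dc: "D \<in> carrier_mat n n" using Pc Qc unfolding D_def by auto
  have hD: "adj D = D" unfolding D_def using adj_minus[OF Pc Qc] hP hQ by simp
  have "D \<noteq> 0\<^sub>m n n"
  proof
    assume "D = 0\<^sub>m n n"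
    then have "\<And>i j. i < n \<Longrightarrow> j < n \<Longrightarrow> (P - Q) $$ (i,j) = 0" unfolding D_def by simp
    then have "P = Q" using Pc Qc by (intro eq_matI) auto
    with ne show False by simp
  qed
  then obtain \<mu> v where mu: "\<mu> \<noteq> 0" and v: "v \<in> carrier_vec n" "v \<noteq> 0\<^sub>v n" and ev: "D *\<^sub>v v = \<mu> \<cdot>\<^sub>v v"
    using herm_nonzero_eigen[OF Dc hD] by blast
  have mur: "cnj \<mu> = \<mu>" using herm_eigen_real[OF Dc hD v ev] .
  define x where "x = P *\<^sub>v v"
  define y where "y = Q *\<^sub>v v"
  have x: "x \<in> carrier_vec n" and y: "y \<in> carrier_vec n" using Pc Qc v unfolding x_def y_def by auto
  have xy: "\<And>i. i < n \<Longrightarrow> x$i = y$i + \<mu> * v$i"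
  proof -
    fix i assume i: "i < n"
    have "D *\<^sub>v v = x - y" unfolding D_def x_def y_def using Pc Qc v by (simp add: minus_mult_distrib_mat_vec)
    then have "(x - y)$i = (\<mu> \<cdot>\<^sub>v v)$i" using ev by simp
    then have "x$i - y$i = \<mu> * v$i" using i x y v by simp
    then show "x$i = y$i + \<mu> * v$i" by (simp add: algebra_simps)
  qed
  define p where "p = conjugate v \<bullet> x"
  define q where "q = conjugate v \<bullet> y"
  define N where "N = conjugate v \<bullet> v"
  have p0: "p \<ge> 0" using psd_qf[OF P v(1)] unfolding p_def x_def qf_def .
  have q0: "q \<ge> 0" using psd_qf[OF Q v(1)] unfolding q_def y_def qf_def .
  have pr: "cnj p = p" using p0 by (simp add: complex_nonneg complex_eq_iff)
  have qr: "cnj q = q" using q0 by (simp add: complex_nonneg complex_eq_iff)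
  have xx: "conjugate x \<bullet> x = conjugate y \<bullet> y"
  proof -
    have "conjugate x \<bullet> x = conjugate v \<bullet> (P *\<^sub>v x)" using qf_adj[OF Pc hP v(1) x] x_def by simp
    also have "P *\<^sub>v x = (P * P) *\<^sub>v v" unfolding x_def using Pc v by (simp add: assoc_mult_mat_vec)
    also have "\<dots> = Q *\<^sub>v y" unfolding PQ y_def using Qc v by (simp add: assoc_mult_mat_vec)
    also have "conjugate v \<bullet> (Q *\<^sub>v y) = conjugate y \<bullet> y" using qf_adj[OF Qc hQ v(1) y] y_def by simp
    finally show ?thesis .
  qed
  have e1: "conjugate x \<bullet> x = conjugate y \<bullet> y + 2 * \<mu> * q + \<mu>^2 * N"
  proof -
    have "conjugate x \<bullet> x = (\<Sum>i<n. cnj (y$i + \<mu> * v$i) * (y$i + \<mu> * v$i))"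
      using x xy by (simp add: sprod_conj_sum[of _ n])
    also have "\<dots> = (\<Sum>i<n. cnj (y$i) * y$i + cnj \<mu> * (cnj (v$i) * y$i)
        + \<mu> * (cnj (y$i) * v$i) + cnj \<mu> * \<mu> * (cnj (v$i) * v$i))"
      by (rule sum.cong) (simp_all add: ring_distribs mult.assoc mult.left_commute)
    also have "\<dots> = (\<Sum>i<n. cnj (y$i) * y$i) + cnj \<mu> * (\<Sum>i<n. cnj (v$i) * y$i)
        + \<mu> * (\<Sum>i<n. cnj (y$i) * v$i) + cnj \<mu> * \<mu> * (\<Sum>i<n. cnj (v$i) * v$i)"
      by (simp only: sum.distrib sum_distrib_left)
    also have "(\<Sum>i<n. cnj (y$i) * v$i) = cnj q" unfolding q_def using v y
      by (simp add: sprod_conj_sum[of _ n] cnj_sum mult.commute)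
    finally show ?thesis using v y mur qr unfolding q_def N_def
      by (simp add: sprod_conj_sum[of _ n] power2_eq_square)
  qed
  have e2: "conjugate y \<bullet> y = conjugate x \<bullet> x - 2 * \<mu> * p + \<mu>^2 * N"
  proof -
    have "conjugate y \<bullet> y = (\<Sum>i<n. cnj (x$i - \<mu> * v$i) * (x$i - \<mu> * v$i))"
      using y xy by (simp add: sprod_conj_sum[of _ n])
    also have "\<dots> = (\<Sum>i<n. cnj (x$i) * x$i - cnj \<mu> * (cnj (v$i) * x$i)
        - \<mu> * (cnj (x$i) * v$i) + cnj \<mu> * \<mu> * (cnj (v$i) * v$i))"
      by (rule sum.cong) (simp_all add: ring_distribs mult.assoc mult.left_commute)
    also have "\<dots> = (\<Sum>i<n. cnj (x$i) * x$i) - cnj \<mu> * (\<Sum>i<n. cnj (v$i) * x$i)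
        - \<mu> * (\<Sum>i<n. cnj (x$i) * v$i) + cnj \<mu> * \<mu> * (\<Sum>i<n. cnj (v$i) * v$i)"
      by (simp only: sum.distrib sum_subtractf sum_distrib_left)
    also have "(\<Sum>i<n. cnj (x$i) * v$i) = cnj p" unfolding p_def using v x
      by (simp add: sprod_conj_sum[of _ n] cnj_sum mult.commute)
    finally show ?thesis using v x mur pr unfolding p_def N_def
      by (simp add: sprod_conj_sum[of _ n] power2_eq_square)
  qed
  from e1 have h1: "2 * \<mu> * q + \<mu>^2 * N = 0" unfolding xx by simp
  from e2 have e2': "conjugate y \<bullet> y = conjugate y \<bullet> y - 2 * \<mu> * p + \<mu>^2 * N" unfolding xx .
  have h2: "\<mu>^2 * N - 2 * \<mu> * p = 0"
  proof -
    have "\<mu>^2 * N - 2 * \<mu> * p = (conjugate y \<bullet> y - 2 * \<mu> * p + \<mu>^2 * N) - conjugate y \<bullet> y"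
      by (simp add: algebra_simps)
    also have "\<dots> = 0" using e2' by simp
    finally show ?thesis .
  qed
  have "2 * \<mu> * (p + q) = (2 * \<mu> * q + \<mu>^2 * N) - (\<mu>^2 * N - 2 * \<mu> * p)"
    by (simp add: algebra_simps)
  also have "\<dots> = 0" using h1 h2 by simp
  finally have "2 * \<mu> * (p + q) = 0" .
  then have "p + q = 0" using mu by simp
  then have "p = 0" using p0 q0 by (simp add: complex_nonneg complex_eq_iff)
  then have "x = 0\<^sub>v n" using psd_qf_zero[OF P v(1)] unfolding p_def x_def qf_def by simp
  have "q = 0" using \<open>p + q = 0\<close> \<open>p = 0\<close> by simp
  then have "y = 0\<^sub>v n" using psd_qf_zero[OF Q v(1)] unfolding q_def y_def qf_def by simp
  have "\<mu> \<cdot>\<^sub>v v = 0\<^sub>v n" using ev \<open>x = 0\<^sub>v n\<close> \<open>y = 0\<^sub>v n\<close> unfolding D_def x_def y_def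
    using Pc Qc v by (simp add: minus_mult_distrib_mat_vec)
  then have "\<And>i. i < n \<Longrightarrow> \<mu> * v$i = 0" using v(1)
    by (metis carrier_vecD index_smult_vec(1) index_zero_vec(1))
  then have "v = 0\<^sub>v n" using mu v(1) by (intro eq_vecI) auto
  with v(2) show False by simp
qed

definition diagm :: "nat \<Rightarrow> (nat \<Rightarrow> complex) \<Rightarrow> complex mat" where
  "diagm k l = mat k k (\<lambda>(i,j). if i = j then l i else 0)"

lemma diagm_carrier[simp]: "diagm k l \<in> carrier_mat k k" by (simp add: diagm_def)
lemma diagm_index: "i < k \<Longrightarrow> j < k \<Longrightarrow> diagm k l $$ (i,j) = (if i = j then l i else 0)"
  by (simp add: diagm_def)

lemma mult_index_sum: "X \<in> carrier_mat n a \<Longrightarrow> Y \<in> carrier_mat a b \<Longrightarrow> i < n \<Longrightarrow> j < b \<Longrightarrow>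
  (X * Y) $$ (i,j) = (\<Sum>m<a. X$$(i,m) * Y$$(m,j))"
  by (simp add: scalar_prod_def row_def col_def atLeast0LessThan)

lemma adj_mult_index_sum: "X \<in> carrier_mat n a \<Longrightarrow> Y \<in> carrier_mat n b \<Longrightarrow> i < a \<Longrightarrow> j < b \<Longrightarrow>
  (adj X * Y) $$ (i,j) = (\<Sum>m<n. cnj (X$$(m,i)) * Y$$(m,j))"
  by (simp add: scalar_prod_def row_def col_def atLeast0LessThan)

lemma mat_vec_index_sum: "X \<in> carrier_mat n a \<Longrightarrow> v \<in> carrier_vec a \<Longrightarrow> i < n \<Longrightarrow>
  (X *\<^sub>v v) $ i = (\<Sum>m<a. X$$(i,m) * v$m)"
  by (simp add: scalar_prod_def row_def atLeast0LessThan)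

lemma adj_mat_vec_index_sum: "X \<in> carrier_mat n a \<Longrightarrow> v \<in> carrier_vec n \<Longrightarrow> i < a \<Longrightarrow>
  (adj X *\<^sub>v v) $ i = (\<Sum>m<n. cnj (X$$(m,i)) * v$m)"
  by (simp add: scalar_prod_def row_def atLeast0LessThan)

lemma mult_diagm_right: assumes X: "X \<in> carrier_mat n k" and ij: "i < n" "j < k"
  shows "(X * diagm k l) $$ (i,j) = X$$(i,j) * l j"
proof -
  have "(X * diagm k l) $$ (i,j) = (\<Sum>m<k. X$$(i,m) * diagm k l $$ (m,j))"
    using assms by (simp add: mult_index_sum[OF X diagm_carrier])
  also have "\<dots> = (\<Sum>m<k. if m = j then X$$(i,j) * l j else 0)"
    using assms by (intro sum.cong) (auto simp: diagm_index)
  also have "\<dots> = X$$(i,j) * l j" using assms by simp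
  finally show ?thesis .
qed

lemma mult_diagm_left: assumes X: "X \<in> carrier_mat k n" and ij: "i < k" "j < n"
  shows "(diagm k l * X) $$ (i,j) = l i * X$$(i,j)"
proof -
  have "(diagm k l * X) $$ (i,j) = (\<Sum>m<k. diagm k l $$ (i,m) * X$$(m,j))"
    using assms by (simp add: mult_index_sum[OF diagm_carrier X])
  also have "\<dots> = (\<Sum>m<k. if m = i then l i * X$$(i,j) else 0)"
    using assms by (intro sum.cong) (auto simp: diagm_index)
  also have "\<dots> = l i * X$$(i,j)" using assms by simp
  finally show ?thesis .
qed

lemma zero_mat_vec: "v \<in> carrier_vec m \<Longrightarrow> 0\<^sub>m n m *\<^sub>v v = 0\<^sub>v n"
  by (rule eq_vecI) (auto simp: scalar_prod_def)
lemma mat_vec_zero: "U \<in> carrier_mat n k \<Longrightarrow> U *\<^sub>v 0\<^sub>v k = 0\<^sub>v n"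
  by (rule eq_vecI) (auto simp: scalar_prod_def)
lemma smult_vec_zero: "c \<cdot>\<^sub>v 0\<^sub>v n = (0\<^sub>v n :: complex vec)"
  by (rule eq_vecI) auto
lemma smult_vec_eq_zero: fixes z :: "complex vec"
  assumes "z \<in> carrier_vec k" "c \<cdot>\<^sub>v z = 0\<^sub>v k" "c \<noteq> 0" shows "z = 0\<^sub>v k"
proof (rule eq_vecI)
  fix i assume i: "i < dim_vec (0\<^sub>v k :: complex vec)"
  have "(c \<cdot>\<^sub>v z)$i = (0\<^sub>v k :: complex vec)$i" using assms(2) by simp
  moreover have "i < dim_vec z" "i < k" using assms i by auto
  ultimately have "c * z$i = 0" by simp
  then show "z $ i = 0\<^sub>v k $ i" using assms \<open>i < k\<close> by simp
qed (use assms in auto)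

lemma find_u:
  assumes A: "A \<in> carrier_mat n n" and h: "adj A = A" and U: "U \<in> carrier_mat n k"
   and UU: "adj U * U = 1\<^sub>m k" and AU: "A * U = U * diagm k l" and kn: "k < n"
  shows "\<exists>u \<mu>. u \<in> carrier_vec n \<and> conjugate u \<bullet> u = 1 \<and> adj U *\<^sub>v u = 0\<^sub>v k \<and> A *\<^sub>v u = \<mu> \<cdot>\<^sub>v u"
proof -
  have Ua: "adj U \<in> carrier_mat k n" using U by simp
  define Pi where "Pi = 1\<^sub>m n - U * adj U"
  have UUa: "U * adj U \<in> carrier_mat n n" using mult_carrier_mat[OF U Ua] .
  have Pi: "Pi \<in> carrier_mat n n" using UUa unfolding Pi_def by (metis minus_carrier_mat)
  have hPi: "adj Pi = Pi" unfolding Pi_def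
    using adj_minus[of "1\<^sub>m n" n n "U * adj U"] U adj_mult[OF U Ua] by simp
  have UPi: "adj U * Pi = 0\<^sub>m k n"
  proof -
    have "adj U * Pi = adj U * 1\<^sub>m n - adj U * (U * adj U)" unfolding Pi_def
      using mult_minus_distrib_mat[OF Ua one_carrier_mat UUa] .
    also have "adj U * 1\<^sub>m n = adj U" using right_mult_one_mat[OF Ua] .
    also have "adj U * (U * adj U) = adj U" using U UU
      by (simp add: assoc_mult_mat[OF Ua U Ua, symmetric])
    finally show ?thesis using Ua by (intro eq_matI) auto
  qed
  have Pi_apply: "Pi *\<^sub>v x = x - U *\<^sub>v (adj U *\<^sub>v x)" if x: "x \<in> carrier_vec n" for x
    unfolding Pi_def using minus_mult_distrib_mat_vec[OF one_carrier_mat UUa x]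
      one_mult_mat_vec[OF x] assoc_mult_mat_vec[OF U Ua x] by simp
  have fixPi: "Pi *\<^sub>v x = x" if x: "x \<in> carrier_vec n" and z: "adj U *\<^sub>v x = 0\<^sub>v k" for x
    using Pi_apply[OF x] z mat_vec_zero[OF U] x by (metis minus_zero_vec)
  have UA: "adj U * A = adj (diagm k l) * adj U"
    using adj_mult[OF A U] adj_mult[OF U diagm_carrier] AU h by metis
  have UAx: "adj U *\<^sub>v (A *\<^sub>v x) = 0\<^sub>v k" if x: "x \<in> carrier_vec n" and z: "adj U *\<^sub>v x = 0\<^sub>v k" for x
  proof -
    have "adj U *\<^sub>v (A *\<^sub>v x) = (adj U * A) *\<^sub>v x" using A Ua x by (simp add: assoc_mult_mat_vec)
    also have "\<dots> = adj (diagm k l) *\<^sub>v (adj U *\<^sub>v x)" unfolding UA using Ua x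
      by (simp add: assoc_mult_mat_vec[of _ k k _ n])
    also have "\<dots> = 0\<^sub>v k" unfolding z by (rule mat_vec_zero) simp
    finally show ?thesis .
  qed
  have UPix: "adj U *\<^sub>v (Pi *\<^sub>v y) = 0\<^sub>v k" if y: "y \<in> carrier_vec n" for y
    using assoc_mult_mat_vec[OF Ua Pi y] UPi zero_mat_vec[OF y] by simp
  define M where "M = Pi * A * Pi"
  have Mc: "M \<in> carrier_mat n n" using Pi A unfolding M_def by simp
  have hM: "adj M = M"
  proof -
    have "adj M = adj Pi * adj (Pi * A)" unfolding M_def using adj_mult[of "Pi * A" n n Pi n] Pi A by simp
    also have "\<dots> = Pi * (A * Pi)" using adj_mult[OF Pi A] hPi h by simp
    also have "\<dots> = M" unfolding M_def using Pi A by (simp add: assoc_mult_mat[of _ n n _ n _ n])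
    finally show ?thesis .
  qed
  have M_apply: "M *\<^sub>v x = Pi *\<^sub>v (A *\<^sub>v (Pi *\<^sub>v x))" if x: "x \<in> carrier_vec n" for x
    unfolding M_def using Pi A x by (simp add: assoc_mult_mat_vec[of _ n n _ n])
  have "\<exists>w \<mu>. w \<in> carrier_vec n \<and> w \<noteq> 0\<^sub>v n \<and> adj U *\<^sub>v w = 0\<^sub>v k \<and> A *\<^sub>v w = \<mu> \<cdot>\<^sub>v w"
  proof (cases "M = 0\<^sub>m n n")
    case False
    then obtain \<mu> v where mu: "\<mu> \<noteq> 0" and v: "v \<in> carrier_vec n" "v \<noteq> 0\<^sub>v n" and ev: "M *\<^sub>v v = \<mu> \<cdot>\<^sub>v v"
      using herm_nonzero_eigen[OF Mc hM] by blast
    have "adj U *\<^sub>v (\<mu> \<cdot>\<^sub>v v) = 0\<^sub>v k" unfolding ev[symmetric] M_apply[OF v(1)]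
      using UPix A Pi v by simp
    then have "\<mu> \<cdot>\<^sub>v (adj U *\<^sub>v v) = 0\<^sub>v k" using Ua v by (simp add: mult_mat_vec)
    then have z: "adj U *\<^sub>v v = 0\<^sub>v k" using smult_vec_eq_zero[of "adj U *\<^sub>v v" k \<mu>] mu Ua v by simp
    have "A *\<^sub>v v = \<mu> \<cdot>\<^sub>v v" using ev M_apply[OF v(1)] fixPi[OF v(1) z] fixPi[OF _ UAx[OF v(1) z]] A v by simp
    then show ?thesis using v z by blast
  next
    case True
    have "Pi \<noteq> 0\<^sub>m n n"
    proof
      assume "Pi = 0\<^sub>m n n"
      then have "cmat_trace Pi = 0" by (simp add: cmat_trace_def)
      moreover have "cmat_trace Pi = of_nat n - of_nat k"
      proof -
        have "cmat_trace Pi = of_nat n - cmat_trace (U * adj U)" unfolding Pi_def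
          using trace_minus[of "1\<^sub>m n" n "U * adj U"] U trace_one by simp
        also have "cmat_trace (U * adj U) = cmat_trace (adj U * U)" using trace_comm[OF U Ua] .
        also have "\<dots> = of_nat k" using UU trace_one by simp
        finally show ?thesis .
      qed
      ultimately show False using kn by simp
    qed
    then obtain i j where ij: "i < n" "j < n" "Pi $$ (i,j) \<noteq> 0"
      using Pi by (metis (no_types, lifting) carrier_matD(1,2) eq_matI index_zero_mat(1,2,3))
    define w where "w = col Pi j"
    have w: "w \<in> carrier_vec n" using Pi unfolding w_def carrier_vec_def by simp
    have "w $ i = Pi $$ (i,j)" unfolding w_def using Pi ij by simp
    then have wnz: "w \<noteq> 0\<^sub>v n" using ij by auto
    have z: "adj U *\<^sub>v w = 0\<^sub>v k" unfolding w_def using col_mult2[OF Ua Pi ij(2)] UPi ij(2)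
      by (metis col_zero index_zero_mat(3))
    have "A *\<^sub>v w = M *\<^sub>v w" using M_apply[OF w] fixPi[OF w z] fixPi[OF _ UAx[OF w z]] A w by simp
    also have "\<dots> = 0\<^sub>v n" using True zero_mat_vec[OF w] by simp
    also have "\<dots> = 0 \<cdot>\<^sub>v w" using w by (intro eq_vecI) auto
    finally show ?thesis using w wnz z by blast
  qed
  then obtain w \<mu> where w: "w \<in> carrier_vec n" "w \<noteq> 0\<^sub>v n" and z: "adj U *\<^sub>v w = 0\<^sub>v k"
    and ev: "A *\<^sub>v w = \<mu> \<cdot>\<^sub>v w" by blast
  define r where "r = (\<Sum>i<n. (cmod (w$i))^2)"
  have wr: "conjugate w \<bullet> w = of_real r" unfolding r_def using sprod_self[OF w(1)] .
  have r0: "r > 0"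
  proof -
    have "r \<ge> 0" unfolding r_def by (simp add: sum_nonneg)
    moreover have "r \<noteq> 0" using wr sprod_self_zero[OF w(1)] w(2) by auto
    ultimately show ?thesis by simp
  qed
  define c where "c = complex_of_real (1 / sqrt r)"
  define u where "u = c \<cdot>\<^sub>v w"
  have u: "u \<in> carrier_vec n" using w unfolding u_def by simp
  have "conjugate u \<bullet> u = cnj c * c * (conjugate w \<bullet> w)"
    unfolding u_def using w by (simp add: conjugate_smult_vec)
  also have "\<dots> = 1" unfolding wr c_def using r0
    by (simp flip: of_real_mult)
  finally have u1: "conjugate u \<bullet> u = 1" .
  have "adj U *\<^sub>v u = 0\<^sub>v k" unfolding u_def using Ua w z by (simp add: mult_mat_vec smult_vec_zero)
  moreover have "A *\<^sub>v u = \<mu> \<cdot>\<^sub>v u" unfolding u_def using A w ev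
    by (simp add: mult_mat_vec smult_smult_assoc mult.commute)
  ultimately show ?thesis using u u1 by blast
qed

lemma diagm_dims[simp]: "dim_row (diagm k l) = k" "dim_col (diagm k l) = k"
  by (auto simp: diagm_def)

lemma spectral_k: assumes A: "A \<in> carrier_mat n n" and h: "adj A = A"
  shows "k \<le> n \<Longrightarrow> \<exists>U l. U \<in> carrier_mat n k \<and> adj U * U = 1\<^sub>m k \<and> A * U = U * diagm k l"
proof (induction k)
  case 0
  have "0\<^sub>m n 0 \<in> carrier_mat n 0" by simp
  moreover have "adj (0\<^sub>m n 0) * 0\<^sub>m n 0 = 1\<^sub>m 0" by (rule eq_matI) auto
  moreover have "A * 0\<^sub>m n 0 = 0\<^sub>m n 0 * diagm 0 (\<lambda>_. 0)" using A by (intro eq_matI) auto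
  ultimately show ?case by blast
next
  case (Suc k)
  then obtain U l where U: "U \<in> carrier_mat n k" and UU: "adj U * U = 1\<^sub>m k"
    and AU: "A * U = U * diagm k l" by auto
  have kn: "k < n" using Suc by simp
  obtain u :: "complex vec" and \<mu> where u: "u \<in> carrier_vec n" and u1: "conjugate u \<bullet> u = 1"
    and z: "adj U *\<^sub>v u = 0\<^sub>v k" and ev: "A *\<^sub>v u = \<mu> \<cdot>\<^sub>v u"
    using find_u[OF A h U UU AU kn] by blast
  define U' where "U' = mat n (Suc k) (\<lambda>(i,j). if j < k then U$$(i,j) else u$i)"
  define l' where "l' = l(k := \<mu>)"
  have U': "U' \<in> carrier_mat n (Suc k)" unfolding U'_def by simp
  have zi: "(\<Sum>m<n. cnj (U$$(m,i)) * u$m) = 0" if i: "i < k" for i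
  proof -
    have "(\<Sum>m<n. cnj (U$$(m,i)) * u$m) = (adj U *\<^sub>v u) $ i"
      using adj_mat_vec_index_sum[OF U u i] by simp
    also have "\<dots> = 0" using z i by simp
    finally show ?thesis .
  qed
  have "adj U' * U' = 1\<^sub>m (Suc k)"
  proof (rule eq_matI)
    fix i j assume "i < dim_row (1\<^sub>m (Suc k))" "j < dim_col (1\<^sub>m (Suc k))"
    then have i: "i < Suc k" and j: "j < Suc k" by auto
    have "(adj U' * U') $$ (i,j) = (\<Sum>m<n. cnj (U'$$(m,i)) * U'$$(m,j))"
      using adj_mult_index_sum[OF U' U' i j] .
    also have "\<dots> = 1\<^sub>m (Suc k) $$ (i,j)"
    proof (cases "i < k"; cases "j < k")
      assume ik: "i < k" and jk: "j < k"
      have "(\<Sum>m<n. cnj (U'$$(m,i)) * U'$$(m,j)) = (\<Sum>m<n. cnj (U$$(m,i)) * U$$(m,j))"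
        unfolding U'_def using ik jk by (intro sum.cong) auto
      also have "\<dots> = (adj U * U) $$ (i,j)" using adj_mult_index_sum[OF U U ik jk] by simp
      finally show ?thesis using UU ik jk by simp
    next
      assume ik: "i < k" and jk: "\<not> j < k"
      then have jk': "j = k" using j by simp
      have "(\<Sum>m<n. cnj (U'$$(m,i)) * U'$$(m,j)) = (\<Sum>m<n. cnj (U$$(m,i)) * u$m)"
        unfolding U'_def using ik jk' by (intro sum.cong) auto
      then show ?thesis using zi[OF ik] ik jk' by simp
    next
      assume ik: "\<not> i < k" and jk: "j < k"
      then have ik': "i = k" using i by simp
      have "(\<Sum>m<n. cnj (U'$$(m,i)) * U'$$(m,j)) = cnj (\<Sum>m<n. cnj (U$$(m,j)) * u$m)"
        unfolding U'_def using ik' jk by (simp add: cnj_sum mult.commute)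
      then show ?thesis using zi[OF jk] ik' jk by simp
    next
      assume ik: "\<not> i < k" and jk: "\<not> j < k"
      then have ik': "i = k" "j = k" using i j by auto
      have "(\<Sum>m<n. cnj (U'$$(m,i)) * U'$$(m,j)) = conjugate u \<bullet> u"
        unfolding U'_def using ik' u by (simp add: sprod_conj_sum[of _ n])
      then show ?thesis using u1 ik' by simp
    qed
    finally show "(adj U' * U') $$ (i,j) = 1\<^sub>m (Suc k) $$ (i,j)" .
  qed (use U' in auto)
  moreover have "A * U' = U' * diagm (Suc k) l'"
  proof (rule eq_matI)
    fix i j assume "i < dim_row (U' * diagm (Suc k) l')" "j < dim_col (U' * diagm (Suc k) l')"
    then have i: "i < n" and j: "j < Suc k" using U' by auto
    have "(A * U') $$ (i,j) = (\<Sum>m<n. A$$(i,m) * U'$$(m,j))" using mult_index_sum[OF A U' i j] .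
    also have "\<dots> = U'$$(i,j) * l' j"
    proof (cases "j < k")
      case True
      have "(\<Sum>m<n. A$$(i,m) * U'$$(m,j)) = (\<Sum>m<n. A$$(i,m) * U$$(m,j))"
        unfolding U'_def using True by (intro sum.cong) auto
      also have "\<dots> = (A * U) $$ (i,j)" using mult_index_sum[OF A U i True] by simp
      also have "\<dots> = U $$ (i,j) * l j" unfolding AU using mult_diagm_right[OF U i True] .
      finally show ?thesis unfolding U'_def l'_def using True i by simp
    next
      case False
      then have jk: "j = k" using j by simp
      have "(\<Sum>m<n. A$$(i,m) * U'$$(m,j)) = (\<Sum>m<n. A$$(i,m) * u$m)"
        unfolding U'_def using jk by (intro sum.cong) auto
      also have "\<dots> = (A *\<^sub>v u) $ i" using mat_vec_index_sum[OF A u i] by simp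
      also have "\<dots> = \<mu> * u $ i" using ev i u by simp
      finally show ?thesis unfolding U'_def l'_def using jk i by (simp add: mult.commute)
    qed
    also have "\<dots> = (U' * diagm (Suc k) l') $$ (i,j)" using mult_diagm_right[OF U' i j] by simp
    finally show "(A * U') $$ (i,j) = (U' * diagm (Suc k) l') $$ (i,j)" .
  qed (use U' A in auto)
  ultimately show ?case using U' by blast
qed

lemma spectral: assumes A: "A \<in> carrier_mat n n" and h: "adj A = A"
  shows "\<exists>U l. U \<in> carrier_mat n n \<and> adj U * U = 1\<^sub>m n \<and> U * adj U = 1\<^sub>m n \<and>
    A * U = U * diagm n l \<and> A = U * diagm n l * adj U"
proof -
  obtain U l where U: "U \<in> carrier_mat n n" and UU: "adj U * U = 1\<^sub>m n" and AU: "A * U = U * diagm n l"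
    using spectral_k[OF A h, of n] by auto
  have UU': "U * adj U = 1\<^sub>m n" using mat_mult_left_right_inverse[OF adj_carrier[OF U] U UU] .
  have "A = A * (U * adj U)" using UU' A by simp
  also have "\<dots> = (A * U) * adj U" using A U by (simp add: assoc_mult_mat[of _ n n _ n _ n])
  finally have "A = U * diagm n l * adj U" unfolding AU .
  then show ?thesis using U UU UU' AU by blast
qed

lemma trace_conj_diag: assumes U: "U \<in> carrier_mat n n" and UU: "adj U * U = 1\<^sub>m n"
  shows "cmat_trace (U * diagm n f * adj U) = (\<Sum>i<n. f i)"
proof -
  have Ua: "adj U \<in> carrier_mat n n" using U by simp
  have "cmat_trace (U * diagm n f * adj U) = cmat_trace (adj U * (U * diagm n f))"
    using trace_comm[OF mult_carrier_mat[OF U diagm_carrier] Ua] .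
  also have "adj U * (U * diagm n f) = diagm n f"
    using assoc_mult_mat[OF Ua U diagm_carrier, symmetric] UU by simp
  finally show ?thesis by (simp add: cmat_trace_def diagm_def)
qed

lemma psd_sqrt_struct: assumes H: "psd n H"
  shows "\<exists>U s. U \<in> carrier_mat n n \<and> adj U * U = 1\<^sub>m n \<and> (\<forall>i<n. s i \<ge> 0) \<and>
     H = U * diagm n (\<lambda>i. of_real ((s i)^2)) * adj U \<and>
     psd n (U * diagm n (\<lambda>i. of_real (s i)) * adj U) \<and>
     (U * diagm n (\<lambda>i. of_real (s i)) * adj U) * (U * diagm n (\<lambda>i. of_real (s i)) * adj U) = H"
proof -
  have A: "H \<in> carrier_mat n n" and h: "adj H = H" using H by (auto simp: psd_def)
  obtain U l where U: "U \<in> carrier_mat n n" and UU: "adj U * U = 1\<^sub>m n" and UU': "U * adj U = 1\<^sub>m n"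
    and AU: "H * U = U * diagm n l" and Aeq: "H = U * diagm n l * adj U"
    using spectral[OF A h] by blast
  have Ua: "adj U \<in> carrier_mat n n" using U by simp
  have lpos: "l i \<ge> 0" if i: "i < n" for i
  proof -
    define c where "c = col U i"
    have c: "c \<in> carrier_vec n" unfolding c_def using U carrier_vec_def by auto
    have Hc: "H *\<^sub>v c = l i \<cdot>\<^sub>v c"
    proof -
      have "H *\<^sub>v c = col (H * U) i" unfolding c_def using col_mult2[OF A U i] by simp
      also have "\<dots> = l i \<cdot>\<^sub>v c"
      proof (rule eq_vecI)
        fix m assume "m < dim_vec (l i \<cdot>\<^sub>v c)"
        then have m: "m < n" using c by simp
        have "col (H * U) i $ m = (U * diagm n l) $$ (m,i)" unfolding AU using U m i by simp
        also have "\<dots> = U$$(m,i) * l i" using mult_diagm_right[OF U m i] .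
        finally show "col (H * U) i $ m = (l i \<cdot>\<^sub>v c) $ m" unfolding c_def using U m i by simp
      qed (use c U A in auto)
      finally show ?thesis .
    qed
    have cc: "conjugate c \<bullet> c = 1"
    proof -
      have "conjugate c \<bullet> c = (\<Sum>m<n. cnj (U$$(m,i)) * U$$(m,i))"
        unfolding c_def using U i by (simp add: sprod_conj_sum[of _ n])
      also have "\<dots> = (adj U * U) $$ (i,i)" using adj_mult_index_sum[OF U U i i] by simp
      finally show ?thesis using UU i by simp
    qed
    have "qf H c = l i" unfolding qf_def Hc using c cc by simp
    then show ?thesis using psd_qf[OF H c] by simp
  qed
  define s where "s i = sqrt (Re (l i))" for i
  have s0: "\<forall>i<n. s i \<ge> 0" unfolding s_def using lpos by (simp add: complex_nonneg)
  have ls: "l i = of_real ((s i)^2)" if i: "i < n" for i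
    using lpos[OF i] unfolding s_def by (simp add: complex_nonneg complex_eq_iff)
  have Dl: "diagm n l = diagm n (\<lambda>i. of_real ((s i)^2))"
    by (rule eq_matI) (auto simp: diagm_def ls)
  define S where "S = diagm n (\<lambda>i. of_real (s i))"
  have S: "S \<in> carrier_mat n n" unfolding S_def by simp
  have SS: "S * S = diagm n l"
  proof (rule eq_matI)
    fix i j assume "i < dim_row (diagm n l)" "j < dim_col (diagm n l)"
    then have i: "i < n" and j: "j < n" by auto
    show "(S * S) $$ (i,j) = diagm n l $$ (i,j)"
      unfolding S_def using mult_diagm_right[OF diagm_carrier i j] i j
      by (simp add: diagm_index ls power2_eq_square)
  qed (auto simp: S_def)
  have hS: "adj S = S" unfolding S_def by (rule eq_matI) (auto simp: diagm_def)
  define P where "P = U * S * adj U"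
  have US: "U * S \<in> carrier_mat n n" using U S by simp
  have P: "P \<in> carrier_mat n n" unfolding P_def using US Ua by simp
  have PP: "P * P = H"
  proof -
    have "P * P = (U * S) * (adj U * P)" unfolding P_def using assoc_mult_mat[OF US Ua P] P_def by simp
    also have "adj U * P = (adj U * (U * S)) * adj U" unfolding P_def
      using assoc_mult_mat[OF Ua US Ua] by simp
    also have "adj U * (U * S) = S" using assoc_mult_mat[OF Ua U S, symmetric] UU S by simp
    also have "U * S * (S * adj U) = U * (S * (S * adj U))" using assoc_mult_mat[OF U S mult_carrier_mat[OF S Ua]] by simp
    also have "S * (S * adj U) = diagm n l * adj U" using assoc_mult_mat[OF S S Ua, symmetric] SS by simp
    also have "U * (diagm n l * adj U) = H" using assoc_mult_mat[OF U diagm_carrier Ua, symmetric] Aeq by simp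
    finally show ?thesis .
  qed
  have hP: "adj P = P"
  proof -
    have "adj P = adj (adj U) * adj (U * S)" unfolding P_def using adj_mult[OF US Ua] .
    also have "\<dots> = U * (S * adj U)" using adj_mult[OF U S] hS by simp
    also have "\<dots> = P" unfolding P_def using assoc_mult_mat[OF U S Ua] by simp
    finally show ?thesis .
  qed
  have qP: "conjugate v \<bullet> (P *\<^sub>v v) \<ge> 0" if v: "v \<in> carrier_vec n" for v
  proof -
    define y where "y = adj U *\<^sub>v v"
    have y: "y \<in> carrier_vec n" unfolding y_def using Ua v by simp
    have "P *\<^sub>v v = U *\<^sub>v (S *\<^sub>v y)" unfolding P_def y_def
      using assoc_mult_mat_vec[OF US Ua v] assoc_mult_mat_vec[OF U S] y y_def by simp
    then have "conjugate v \<bullet> (P *\<^sub>v v) = conjugate y \<bullet> (S *\<^sub>v y)"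
      using sprod_adj[OF U v, of "S *\<^sub>v y"] S y unfolding y_def by simp
    also have "\<dots> = (\<Sum>i<n. cnj (y$i) * (S *\<^sub>v y)$i)" using S y by (simp add: sprod_conj_sum[of _ n])
    also have "\<dots> = (\<Sum>i<n. complex_of_real (s i * (cmod (y$i))^2))"
    proof (rule sum.cong)
      fix i assume "i \<in> {..<n}"
      then have i: "i < n" by simp
      have "(S *\<^sub>v y)$i = (\<Sum>m<n. S$$(i,m) * y$m)" using mat_vec_index_sum[OF S y i] .
      also have "\<dots> = (\<Sum>m<n. if m = i then of_real (s i) * y$i else 0)"
        unfolding S_def using i by (intro sum.cong) (auto simp: diagm_index)
      also have "\<dots> = of_real (s i) * y$i" using i by simp
      finally show "cnj (y$i) * (S *\<^sub>v y)$i = complex_of_real (s i * (cmod (y$i))^2)"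
        by (simp add: cmod_sq[symmetric] mult.commute mult.left_commute)
    qed simp
    also have "\<dots> = complex_of_real (\<Sum>i<n. s i * (cmod (y$i))^2)" by simp
    finally have eq: "conjugate v \<bullet> (P *\<^sub>v v) = complex_of_real (\<Sum>i<n. s i * (cmod (y$i))^2)" .
    have R0: "(\<Sum>i<n. s i * (cmod (y$i))^2) \<ge> 0" using s0 by (intro sum_nonneg) auto
    show ?thesis unfolding eq complex_nonneg by (simp only: Re_complex_of_real Im_complex_of_real) (use R0 in simp)
  qed
  have "psd n P" unfolding psd_def using P hP qP by blast
  then show ?thesis using U UU s0 Aeq Dl PP unfolding P_def S_def by metis
qed

lemma psd_AA: assumes A: "A \<in> carrier_mat n m" shows "psd m (adj A * A)"
proof -
  have Aa: "adj A \<in> carrier_mat m n" using A by simp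
  have c: "adj A * A \<in> carrier_mat m m" using mult_carrier_mat[OF Aa A] .
  have h: "adj (adj A * A) = adj A * A" using adj_mult[OF Aa A] by simp
  have q: "conjugate v \<bullet> ((adj A * A) *\<^sub>v v) \<ge> 0" if v: "v \<in> carrier_vec m" for v
  proof -
    have Av: "A *\<^sub>v v \<in> carrier_vec n" using A v by simp
    have "conjugate v \<bullet> ((adj A * A) *\<^sub>v v) = conjugate v \<bullet> (adj A *\<^sub>v (A *\<^sub>v v))"
      using assoc_mult_mat_vec[OF Aa A v] by simp
    also have "\<dots> = conjugate (A *\<^sub>v v) \<bullet> (A *\<^sub>v v)" using sprod_adj[OF Aa v Av] by simp
    also have "\<dots> = of_real (\<Sum>i<n. (cmod ((A *\<^sub>v v)$i))^2)" using sprod_self[OF Av] .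
    finally have eq: "conjugate v \<bullet> ((adj A * A) *\<^sub>v v) = of_real (\<Sum>i<n. (cmod ((A *\<^sub>v v)$i))^2)" .
    have R0: "(\<Sum>i<n. (cmod ((A *\<^sub>v v)$i))^2) \<ge> 0" by (intro sum_nonneg) auto
    show ?thesis unfolding eq complex_nonneg by (simp only: Re_complex_of_real Im_complex_of_real) (use R0 in simp)
  qed
  show ?thesis unfolding psd_def using c h q by blast
qed

lemma tn_struct: assumes A: "A \<in> carrier_mat n n"
  shows "\<exists>s. (\<forall>i<n. s i \<ge> 0) \<and> trace_norm A = (\<Sum>i<n. s i) \<and>
     (\<Sum>i<n. (s i)^2) = (\<Sum>i<n. \<Sum>k<n. (cmod (A$$(k,i)))^2)"
proof -
  have H: "psd n (adj A * A)" using psd_AA[OF A] .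
  obtain U s where U: "U \<in> carrier_mat n n" and UU: "adj U * U = 1\<^sub>m n" and s0: "\<forall>i<n. s i \<ge> 0"
    and Heq: "adj A * A = U * diagm n (\<lambda>i. of_real ((s i)^2)) * adj U"
    and Ppsd: "psd n (U * diagm n (\<lambda>i. of_real (s i)) * adj U)"
    and PP: "(U * diagm n (\<lambda>i. of_real (s i)) * adj U) * (U * diagm n (\<lambda>i. of_real (s i)) * adj U) = adj A * A"
    using psd_sqrt_struct[OF H] by blast
  define P where "P = U * diagm n (\<lambda>i. of_real (s i)) * adj U"
  have theP: "(THE P. psd (dim_col A) P \<and> P * P = adj A * A) = P"
  proof (rule the_equality)
    show "psd (dim_col A) P \<and> P * P = adj A * A" using Ppsd PP A unfolding P_def by simp
  next
    fix Q assume "psd (dim_col A) Q \<and> Q * Q = adj A * A"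
    then show "Q = P" using psd_sqrt_unique[of n Q P] Ppsd PP A unfolding P_def by simp
  qed
  have "trace_norm A = Re (cmat_trace P)" unfolding trace_norm_def theP ..
  also have "cmat_trace P = (\<Sum>i<n. of_real (s i))" unfolding P_def using trace_conj_diag[OF U UU] .
  finally have t1: "trace_norm A = (\<Sum>i<n. s i)" by simp
  have "complex_of_real (\<Sum>i<n. (s i)^2) = (\<Sum>i<n. of_real ((s i)^2))" by simp
  also have "\<dots> = cmat_trace (adj A * A)" unfolding Heq using trace_conj_diag[OF U UU] by simp
  also have "\<dots> = complex_of_real (\<Sum>i<n. \<Sum>k<n. (cmod (A$$(k,i)))^2)" using trace_AadjA[OF A] .
  finally have t2: "(\<Sum>i<n. (s i)^2) = (\<Sum>i<n. \<Sum>k<n. (cmod (A$$(k,i)))^2)" by (simp only: of_real_eq_iff)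
  show ?thesis using s0 t1 t2 by blast
qed

lemma tn_nonneg: "A \<in> carrier_mat n n \<Longrightarrow> trace_norm A \<ge> 0"
  using tn_struct[of A n] by (metis lessThan_iff sum_nonneg)

lemma sum_sq_le_sq_sum: fixes s :: "nat \<Rightarrow> real" assumes "\<forall>i<n. s i \<ge> 0"
  shows "(\<Sum>i<n. (s i)^2) \<le> (\<Sum>i<n. s i)^2"
proof -
  have "(\<Sum>i<n. (s i)^2) = (\<Sum>i<n. s i * s i)" by (simp add: power2_eq_square)
  also have "\<dots> \<le> (\<Sum>i<n. s i * (\<Sum>j<n. s j))"
  proof (rule sum_mono)
    fix i assume i: "i \<in> {..<n}"
    have "s i \<le> (\<Sum>j<n. s j)" using assms i by (intro member_le_sum) auto
    then show "s i * s i \<le> s i * (\<Sum>j<n. s j)" using assms i by (simp add: mult_left_mono)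
  qed
  also have "\<dots> = (\<Sum>i<n. s i)^2" by (simp add: power2_eq_square sum_distrib_right)
  finally show ?thesis .
qed

lemma tn_entry: assumes A: "A \<in> carrier_mat n n" and i: "i < n" and j: "j < n"
  shows "cmod (A$$(i,j)) \<le> trace_norm A"
proof -
  obtain s where s0: "\<forall>i<n. s i \<ge> 0" and t1: "trace_norm A = (\<Sum>i<n. s i)"
    and t2: "(\<Sum>i<n. (s i)^2) = (\<Sum>i<n. \<Sum>k<n. (cmod (A$$(k,i)))^2)"
    using tn_struct[OF A] by blast
  have "(cmod (A$$(i,j)))^2 \<le> (\<Sum>k<n. (cmod (A$$(k,j)))^2)"
    using i by (intro member_le_sum[where f = "\<lambda>k. (cmod (A$$(k,j)))^2"]) auto
  also have "\<dots> \<le> (\<Sum>i<n. \<Sum>k<n. (cmod (A$$(k,i)))^2)"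
    using j by (intro member_le_sum[where f = "\<lambda>i. \<Sum>k<n. (cmod (A$$(k,i)))^2"]) (auto intro: sum_nonneg)
  also have "\<dots> \<le> (trace_norm A)^2" unfolding t2[symmetric] t1 using sum_sq_le_sq_sum[OF s0] .
  finally show ?thesis using tn_nonneg[OF A] by (meson abs_le_square_iff abs_of_nonneg norm_ge_zero power2_le_imp_le)
qed

lemma tn_hs: assumes A: "A \<in> carrier_mat n n"
  shows "trace_norm A \<le> sqrt (real n) * sqrt (\<Sum>i<n. \<Sum>k<n. (cmod (A$$(k,i)))^2)"
proof -
  obtain s where s0: "\<forall>i<n. s i \<ge> 0" and t1: "trace_norm A = (\<Sum>i<n. s i)"
    and t2: "(\<Sum>i<n. (s i)^2) = (\<Sum>i<n. \<Sum>k<n. (cmod (A$$(k,i)))^2)"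
    using tn_struct[OF A] by blast
  have "(trace_norm A)^2 \<le> (\<Sum>i<n. (s i)^2) * real n"
    unfolding t1 using sum_squared_le_sum_of_squares[of s "{..<n}"] by simp
  then have "sqrt ((trace_norm A)^2) \<le> sqrt ((\<Sum>i<n. (s i)^2) * real n)" by (rule real_sqrt_le_mono)
  then show ?thesis using tn_nonneg[OF A] t2 by (simp add: real_sqrt_mult mult.commute)
qed

lemma tn_zero: "trace_norm (0\<^sub>m n n) = 0"
proof -
  have "trace_norm (0\<^sub>m n n) \<le> sqrt (real n) * sqrt (\<Sum>i<n. \<Sum>k<n. (cmod ((0\<^sub>m n n :: complex mat)$$(k,i)))^2)"
    using tn_hs[of "0\<^sub>m n n" n] by simp
  also have "\<dots> = 0" by simp
  finally show ?thesis using tn_nonneg[of "0\<^sub>m n n" n] by simp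
qed

lemma tn_pos: assumes "A \<in> carrier_mat n n" "A \<noteq> 0\<^sub>m n n" shows "trace_norm A > 0"
proof -
  obtain i j where ij: "i < n" "j < n" "A$$(i,j) \<noteq> 0"
    using assms by (metis (no_types, lifting) carrier_matD(1,2) eq_matI index_zero_mat(1,2,3))
  then show ?thesis using tn_entry[OF assms(1) ij(1,2)] by (meson less_le_trans zero_less_norm_iff)
qed

lemma matrix_unit_carrier[simp]: "matrix_unit d a b \<in> carrier_mat d d"
  by (simp add: matrix_unit_def)
lemma matrix_unit_dims[simp]: "dim_row (matrix_unit d a b) = d" "dim_col (matrix_unit d a b) = d"
  by (auto simp: matrix_unit_def)
lemma matrix_unit_index: "i < d \<Longrightarrow> j < d \<Longrightarrow> matrix_unit d a b $$ (i,j) = (if i = a \<and> j = b then 1 else 0)"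
  by (simp add: matrix_unit_def)

lemma lin_carrier: "linear_on_Md d F \<Longrightarrow> X \<in> carrier_mat d d \<Longrightarrow> F X \<in> carrier_mat d d"
  unfolding linear_on_Md_def by blast
lemma lin_add: "linear_on_Md d F \<Longrightarrow> X \<in> carrier_mat d d \<Longrightarrow> Y \<in> carrier_mat d d \<Longrightarrow> F (X + Y) = F X + F Y"
  unfolding linear_on_Md_def by blast
lemma lin_smult: "linear_on_Md d F \<Longrightarrow> X \<in> carrier_mat d d \<Longrightarrow> F (c \<cdot>\<^sub>m X) = c \<cdot>\<^sub>m F X"
  unfolding linear_on_Md_def by blast

lemma lin_zero: assumes F: "linear_on_Md d F" shows "F (0\<^sub>m d d) = 0\<^sub>m d d"
proof -
  have "0\<^sub>m d d = (0::complex) \<cdot>\<^sub>m (0\<^sub>m d d :: complex mat)" by (rule eq_matI) auto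
  then have "F (0\<^sub>m d d) = 0 \<cdot>\<^sub>m F (0\<^sub>m d d)" using lin_smult[OF F, of "0\<^sub>m d d" 0] by simp
  also have "\<dots> = 0\<^sub>m d d" using lin_carrier[OF F, of "0\<^sub>m d d"] by (intro eq_matI) auto
  finally show ?thesis .
qed

lemma lin_minus: assumes F: "linear_on_Md d F" and X: "X \<in> carrier_mat d d" and Y: "Y \<in> carrier_mat d d"
  shows "F (X - Y) = F X - F Y"
proof -
  have "X - Y = X + (-1) \<cdot>\<^sub>m Y" using X Y by (intro eq_matI) auto
  then have "F (X - Y) = F X + (-1) \<cdot>\<^sub>m F Y" using lin_add[OF F X] lin_smult[OF F Y] Y by simp
  also have "\<dots> = F X - F Y" using lin_carrier[OF F X] lin_carrier[OF F Y] by (intro eq_matI) auto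
  finally show ?thesis .
qed

lemma lin_expand: assumes F: "linear_on_Md d F" and X: "X \<in> carrier_mat d d" and i: "i < d" and j: "j < d"
  shows "F X $$ (i,j) = (\<Sum>a<d. \<Sum>b<d. X$$(a,b) * F (matrix_unit d a b) $$ (i,j))"
proof -
  define part where "part k = mat d d (\<lambda>(a,b). if b + a * d < k then X$$(a,b) else 0)" for k
  have pc: "part k \<in> carrier_mat d d" for k unfolding part_def by simp
  have step: "k < d * d \<Longrightarrow> part (Suc k) = part k + X$$(k div d, k mod d) \<cdot>\<^sub>m matrix_unit d (k div d) (k mod d)" for k
  proof (rule eq_matI)
    fix a b assume k: "k < d * d" and ab: "a < dim_row (part k + X$$(k div d, k mod d) \<cdot>\<^sub>m matrix_unit d (k div d) (k mod d))"
      "b < dim_col (part k + X$$(k div d, k mod d) \<cdot>\<^sub>m matrix_unit d (k div d) (k mod d))"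
    then have a: "a < d" and b: "b < d" by (auto simp: part_def matrix_unit_def)
    have eq: "b + a * d = k \<longleftrightarrow> a = k div d \<and> b = k mod d"
    proof
      assume "b + a * d = k" then show "a = k div d \<and> b = k mod d" using b by auto
    next
      assume "a = k div d \<and> b = k mod d" then show "b + a * d = k" by (simp add: mod_div_mult_eq add.commute)
    qed
    show "part (Suc k) $$ (a,b) = (part k + X$$(k div d, k mod d) \<cdot>\<^sub>m matrix_unit d (k div d) (k mod d)) $$ (a,b)"
      using a b eq by (auto simp: part_def matrix_unit_index less_Suc_eq)
  qed (auto simp: part_def)
  have ind: "k \<le> d * d \<Longrightarrow> F (part k) $$ (i,j) = (\<Sum>m<k. X$$(m div d, m mod d) * F (matrix_unit d (m div d) (m mod d)) $$ (i,j))" for k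
  proof (induction k)
    case 0
    have "part 0 = 0\<^sub>m d d" unfolding part_def by (rule eq_matI) auto
    then show ?case using lin_zero[OF F] i j by simp
  next
    case (Suc k)
    then have k: "k < d * d" by simp
    have "F (part (Suc k)) = F (part k) + X$$(k div d, k mod d) \<cdot>\<^sub>m F (matrix_unit d (k div d) (k mod d))"
      unfolding step[OF k] using lin_add[OF F pc] lin_smult[OF F matrix_unit_carrier] by simp
    moreover have "dim_row (F (matrix_unit d (k div d) (k mod d))) = d" "dim_col (F (matrix_unit d (k div d) (k mod d))) = d"
      using lin_carrier[OF F matrix_unit_carrier] by auto
    ultimately show ?case using Suc k i j by simp
  qed
  have "part (d * d) = X"
  proof (rule eq_matI)
    fix a b assume "a < dim_row X" "b < dim_col X"
    then have a: "a < d" and b: "b < d" using X by auto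
    have "b + a * d < d * d"
    proof -
      have "b + a * d < d + a * d" using b by simp
      also have "\<dots> = (Suc a) * d" by simp
      also have "\<dots> \<le> d * d" using a by (metis Suc_leI mult_le_mono1)
      finally show ?thesis .
    qed
    then show "part (d * d) $$ (a,b) = X $$ (a,b)" using a b by (simp add: part_def)
  qed (use X in \<open>auto simp: part_def\<close>)
  then have "F X $$ (i,j) = (\<Sum>m<d * d. X$$(m div d, m mod d) * F (matrix_unit d (m div d) (m mod d)) $$ (i,j))"
    using ind[of "d * d"] by simp
  also have "\<dots> = (\<Sum>a<d. \<Sum>b<d. X$$(a,b) * F (matrix_unit d a b) $$ (i,j))"
    by (subst sum_mult_product) (intro sum.cong refl, simp)
  finally show ?thesis .
qed

lemma lin_iter: assumes "linear_on_Md d E" shows "linear_on_Md d (E ^^ k)"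
proof (induction k)
  case 0 then show ?case by (simp add: linear_on_Md_def)
next
  case (Suc k)
  show ?case unfolding linear_on_Md_def
    using Suc assms by (simp add: lin_carrier lin_add lin_smult)
qed

lemma tp_iter: assumes "linear_on_Md d E" "trace_preserving d E" shows "trace_preserving d (E ^^ k)"
proof (induction k)
  case 0 then show ?case by (simp add: trace_preserving_def)
next
  case (Suc k)
  show ?case unfolding trace_preserving_def
    using Suc assms lin_iter[OF assms(1), of k] by (simp add: lin_carrier trace_preserving_def)
qed

context fixes d :: nat and E :: "complex mat \<Rightarrow> complex mat"
  assumes lin: "linear_on_Md d E" and tp: "trace_preserving d E"
begin

lemma E_bound: "\<exists>C \<ge> 0. \<forall>\<sigma> \<in> carrier_mat d d. trace_norm (E \<sigma>) \<le> C * trace_norm \<sigma>"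
proof -
  define K where "K i j = (\<Sum>a<d. \<Sum>b<d. cmod (E (matrix_unit d a b) $$ (i,j)))" for i j
  define C where "C = sqrt (real d) * sqrt (\<Sum>i<d. \<Sum>k<d. (K k i)^2)"
  have C0: "C \<ge> 0" unfolding C_def by (intro mult_nonneg_nonneg real_sqrt_ge_zero sum_nonneg) auto
  have "trace_norm (E \<sigma>) \<le> C * trace_norm \<sigma>" if s: "\<sigma> \<in> carrier_mat d d" for \<sigma>
  proof -
    have Es: "E \<sigma> \<in> carrier_mat d d" using lin_carrier[OF lin s] .
    have t0: "trace_norm \<sigma> \<ge> 0" using tn_nonneg[OF s] .
    have ent: "cmod (E \<sigma> $$ (i,j)) \<le> trace_norm \<sigma> * K i j" if i: "i < d" and j: "j < d" for i j
    proof -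
      have "cmod (E \<sigma> $$ (i,j)) = cmod (\<Sum>a<d. \<Sum>b<d. \<sigma>$$(a,b) * E (matrix_unit d a b) $$ (i,j))"
        using lin_expand[OF lin s i j] by simp
      also have "\<dots> \<le> (\<Sum>a<d. cmod (\<Sum>b<d. \<sigma>$$(a,b) * E (matrix_unit d a b) $$ (i,j)))"
        by (rule norm_sum)
      also have "\<dots> \<le> (\<Sum>a<d. \<Sum>b<d. cmod (\<sigma>$$(a,b) * E (matrix_unit d a b) $$ (i,j)))"
        by (intro sum_mono norm_sum)
      also have "\<dots> \<le> (\<Sum>a<d. \<Sum>b<d. trace_norm \<sigma> * cmod (E (matrix_unit d a b) $$ (i,j)))"
      proof (intro sum_mono)
        fix a b assume "a \<in> {..<d}" "b \<in> {..<d}"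
        then have "cmod (\<sigma>$$(a,b)) \<le> trace_norm \<sigma>" using tn_entry[OF s] by simp
        then show "cmod (\<sigma>$$(a,b) * E (matrix_unit d a b) $$ (i,j)) \<le> trace_norm \<sigma> * cmod (E (matrix_unit d a b) $$ (i,j))"
          by (simp add: norm_mult mult_right_mono)
      qed
      also have "\<dots> = trace_norm \<sigma> * K i j" unfolding K_def by (simp add: sum_distrib_left)
      finally show ?thesis .
    qed
    have "trace_norm (E \<sigma>) \<le> sqrt (real d) * sqrt (\<Sum>i<d. \<Sum>k<d. (cmod (E \<sigma> $$ (k,i)))^2)"
      using tn_hs[OF Es] .
    also have "\<dots> \<le> sqrt (real d) * sqrt (\<Sum>i<d. \<Sum>k<d. (trace_norm \<sigma> * K k i)^2)"
    proof (intro mult_left_mono real_sqrt_le_mono sum_mono)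
      fix i k assume "i \<in> {..<d}" "k \<in> {..<d}"
      then show "(cmod (E \<sigma> $$ (k,i)))^2 \<le> (trace_norm \<sigma> * K k i)^2"
        using ent[of k i] by (simp add: power_mono)
    qed simp
    also have "(\<Sum>i<d. \<Sum>k<d. (trace_norm \<sigma> * K k i)^2) = (trace_norm \<sigma>)^2 * (\<Sum>i<d. \<Sum>k<d. (K k i)^2)"
      by (simp add: power_mult_distrib sum_distrib_left)
    also have "sqrt (real d) * sqrt \<dots> = trace_norm \<sigma> * C"
      unfolding C_def using t0 by (simp add: real_sqrt_mult)
    finally show ?thesis by (simp add: mult.commute)
  qed
  then show ?thesis using C0 by blast
qed

definition "tauset = insert 0 {trace_norm (E \<sigma>) / trace_norm \<sigma> | \<sigma>.
        \<sigma> \<in> carrier_mat d d \<and> \<sigma> \<noteq> 0\<^sub>m d d \<and> cmat_trace \<sigma> = 0}"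

lemma tau_eq: "ergodicity_coeff d E = Sup tauset"
  unfolding ergodicity_coeff_def tauset_def ..

lemma bdd_tau: "bdd_above tauset"
proof -
  obtain C where C0: "C \<ge> 0" and C: "\<forall>\<sigma> \<in> carrier_mat d d. trace_norm (E \<sigma>) \<le> C * trace_norm \<sigma>"
    using E_bound by blast
  have "\<forall>x \<in> tauset. x \<le> C"
  proof
    fix x assume "x \<in> tauset"
    then show "x \<le> C"
    proof (cases "x = 0")
      case False
      with \<open>x \<in> tauset\<close> obtain \<sigma> where s: "\<sigma> \<in> carrier_mat d d" "\<sigma> \<noteq> 0\<^sub>m d d"
        and x: "x = trace_norm (E \<sigma>) / trace_norm \<sigma>" unfolding tauset_def by auto
      have "trace_norm \<sigma> > 0" using tn_pos[OF s] .
      then show ?thesis unfolding x using C s by (simp add: pos_divide_le_eq)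
    qed (use C0 in simp)
  qed
  then show ?thesis by (meson bdd_aboveI)
qed

lemma tau_nonneg: "ergodicity_coeff d E \<ge> 0"
  unfolding tau_eq by (rule cSup_upper[OF _ bdd_tau]) (simp add: tauset_def)

lemma tau_bound: assumes s: "\<sigma> \<in> carrier_mat d d" and t: "cmat_trace \<sigma> = 0"
  shows "trace_norm (E \<sigma>) \<le> ergodicity_coeff d E * trace_norm \<sigma>"
proof (cases "\<sigma> = 0\<^sub>m d d")
  case True
  then show ?thesis using lin_zero[OF lin] tn_zero tn_nonneg tau_nonneg by simp
next
  case False
  have pos: "trace_norm \<sigma> > 0" using tn_pos[OF s False] .
  have "trace_norm (E \<sigma>) / trace_norm \<sigma> \<in> tauset" unfolding tauset_def using s t False by blast
  then have "trace_norm (E \<sigma>) / trace_norm \<sigma> \<le> ergodicity_coeff d E"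
    unfolding tau_eq by (rule cSup_upper[OF _ bdd_tau])
  then show ?thesis using pos by (simp add: pos_divide_le_eq)
qed

lemma tau_iter: assumes s: "\<sigma> \<in> carrier_mat d d" and t: "cmat_trace \<sigma> = 0"
  shows "trace_norm ((E ^^ k) \<sigma>) \<le> ergodicity_coeff d E ^ k * trace_norm \<sigma>"
proof (induction k)
  case 0 then show ?case by simp
next
  case (Suc k)
  have c: "(E ^^ k) \<sigma> \<in> carrier_mat d d" using lin_carrier[OF lin_iter[OF lin] s] .
  have tr: "cmat_trace ((E ^^ k) \<sigma>) = 0" using tp_iter[OF lin tp, of k] s t unfolding trace_preserving_def by simp
  have "trace_norm ((E ^^ Suc k) \<sigma>) = trace_norm (E ((E ^^ k) \<sigma>))" by simp
  also have "\<dots> \<le> ergodicity_coeff d E * trace_norm ((E ^^ k) \<sigma>)" using tau_bound[OF c tr] .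
  also have "\<dots> \<le> ergodicity_coeff d E * (ergodicity_coeff d E ^ k * trace_norm \<sigma>)"
    using Suc tau_nonneg by (rule mult_left_mono)
  finally show ?case by simp
qed

end

definition rk1 :: "nat \<Rightarrow> complex vec \<Rightarrow> complex mat" where
  "rk1 d v = mat d d (\<lambda>(i,j). v$i * cnj (v$j))"

lemma rk1_psd: assumes v: "v \<in> carrier_vec d" shows "psd d (rk1 d v)"
proof -
  have c: "rk1 d v \<in> carrier_mat d d" by (simp add: rk1_def)
  have h: "adj (rk1 d v) = rk1 d v" by (rule eq_matI) (auto simp: rk1_def mult.commute)
  have q: "conjugate w \<bullet> (rk1 d v *\<^sub>v w) \<ge> 0" if w: "w \<in> carrier_vec d" for w
  proof -
    define z where "z = (\<Sum>j<d. cnj (v$j) * w$j)"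
    have "conjugate w \<bullet> (rk1 d v *\<^sub>v w) = (\<Sum>i<d. cnj (w$i) * (rk1 d v *\<^sub>v w)$i)"
      using c w by (simp add: sprod_conj_sum[of _ d])
    also have "\<dots> = (\<Sum>i<d. cnj (w$i) * (v$i * z))"
    proof (rule sum.cong)
      fix i assume "i \<in> {..<d}"
      then have i: "i < d" by simp
      have "(rk1 d v *\<^sub>v w)$i = (\<Sum>j<d. rk1 d v $$ (i,j) * w$j)" using mat_vec_index_sum[OF c w i] .
      also have "\<dots> = v$i * z" unfolding z_def using i by (simp add: rk1_def sum_distrib_left mult.assoc)
      finally show "cnj (w$i) * (rk1 d v *\<^sub>v w)$i = cnj (w$i) * (v$i * z)" by simp
    qed simp
    also have "\<dots> = cnj z * z" unfolding z_def by (simp add: cnj_sum sum_distrib_right mult.commute mult.left_commute mult.assoc)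
    also have "\<dots> = complex_of_real ((cmod z)^2)" using cmod_sq[of z] by (simp add: mult.commute)
    finally have eq: "conjugate w \<bullet> (rk1 d v *\<^sub>v w) = complex_of_real ((cmod z)^2)" .
    show ?thesis unfolding eq complex_nonneg by (simp only: Re_complex_of_real Im_complex_of_real) simp
  qed
  show ?thesis unfolding psd_def using c h q by blast
qed

lemma block_one: "X \<in> carrier_mat d d \<Longrightarrow> block d X 0 0 = X"
  by (rule eq_matI) (auto simp: block_def)

lemma CP_psd: assumes cp: "completely_positive d E" and lin: "linear_on_Md d E" and X: "psd d X"
  shows "psd d (E X)"
proof -
  have Xc: "X \<in> carrier_mat d d" using X by (simp add: psd_def)
  have EX: "E X \<in> carrier_mat d d" using lin_carrier[OF lin Xc] .
  have "psd (1 * d) X" using X by simp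
  then have "psd (1 * d) (id_tensor 1 d E X)" using cp unfolding completely_positive_def by blast
  moreover have "id_tensor 1 d E X = E X"
  proof (rule eq_matI)
    fix r c assume "r < dim_row (E X)" "c < dim_col (E X)"
    then have r: "r < d" and c: "c < d" using EX by auto
    then show "id_tensor 1 d E X $$ (r,c) = E X $$ (r,c)"
      using block_one[OF Xc] by (simp add: id_tensor_def)
  qed (use EX in \<open>auto simp: id_tensor_def\<close>)
  ultimately show ?thesis by (metis mult_1)
qed

lemma psd_herm_entry: "psd d P \<Longrightarrow> i < d \<Longrightarrow> j < d \<Longrightarrow> cnj (P $$ (j,i)) = P $$ (i,j)"
  unfolding psd_def by (metis adj_index carrier_matD(1,2))

lemma herm_unit: assumes cp: "completely_positive d E" and lin: "linear_on_Md d E"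
  and a: "a < d" and b: "b < d" and i: "i < d" and j: "j < d"
  shows "cnj (E (matrix_unit d a b) $$ (j,i)) = E (matrix_unit d b a) $$ (i,j)"
proof -
  let ?e = "matrix_unit d"
  have ec: "\<And>x y. E (?e x y) \<in> carrier_mat d d" using lin_carrier[OF lin matrix_unit_carrier] .
  have dims: "\<And>x y. dim_row (E (?e x y)) = d" "\<And>x y. dim_col (E (?e x y)) = d" using ec by auto
  have diagpsd: "psd d (E (?e x x))" if x: "x < d" for x
  proof -
    have "?e x x = rk1 d (unit_vec d x)" by (rule eq_matI) (auto simp: rk1_def matrix_unit_def unit_vec_def)
    then show ?thesis using CP_psd[OF cp lin rk1_psd[of "unit_vec d x" d]] by simp
  qed
  show ?thesis
  proof (cases "a = b")
    case True
    then show ?thesis using psd_herm_entry[OF diagpsd[OF a] i j] by simp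
  next
    case False
    define G where "G = E (?e a a) + E (?e b b)"
    have Gc: "G \<in> carrier_mat d d" unfolding G_def using ec by simp
    have Gh: "cnj (G $$ (j,i)) = G $$ (i,j)" unfolding G_def using i j dims
      psd_herm_entry[OF diagpsd[OF a] i j] psd_herm_entry[OF diagpsd[OF b] i j] by simp
    define v :: "complex vec" where "v = unit_vec d a + unit_vec d b"
    define w :: "complex vec" where "w = unit_vec d a + \<i> \<cdot>\<^sub>v unit_vec d b"
    have v: "v \<in> carrier_vec d" and w: "w \<in> carrier_vec d" unfolding v_def w_def by auto
    have rv: "rk1 d v = ?e a a + ?e b b + ?e a b + ?e b a"
      by (rule eq_matI) (use False a b in \<open>auto simp: rk1_def matrix_unit_def v_def unit_vec_def\<close>)
    have rw: "rk1 d w = ?e a a + ?e b b + (-\<i>) \<cdot>\<^sub>m ?e a b + \<i> \<cdot>\<^sub>m ?e b a"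
      by (rule eq_matI) (use False a b in \<open>auto simp: rk1_def matrix_unit_def w_def unit_vec_def\<close>)
    have Ev: "E (rk1 d v) = G + E (?e a b) + E (?e b a)"
    proof -
      have c1: "?e a a + ?e b b \<in> carrier_mat d d" by simp
      have c2: "?e a a + ?e b b + ?e a b \<in> carrier_mat d d" by simp
      have "E (rk1 d v) = E (?e a a + ?e b b + ?e a b) + E (?e b a)"
        unfolding rv using lin_add[OF lin c2 matrix_unit_carrier] .
      also have "E (?e a a + ?e b b + ?e a b) = E (?e a a + ?e b b) + E (?e a b)"
        using lin_add[OF lin c1 matrix_unit_carrier] .
      also have "E (?e a a + ?e b b) = G" unfolding G_def using lin_add[OF lin matrix_unit_carrier matrix_unit_carrier] .
      finally show ?thesis .
    qed
    have Ew: "E (rk1 d w) = G + (-\<i>) \<cdot>\<^sub>m E (?e a b) + \<i> \<cdot>\<^sub>m E (?e b a)"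
    proof -
      have c1: "?e a a + ?e b b \<in> carrier_mat d d" by simp
      have c2: "?e a a + ?e b b + (-\<i>) \<cdot>\<^sub>m ?e a b \<in> carrier_mat d d" by simp
      have c3: "(-\<i>) \<cdot>\<^sub>m ?e a b \<in> carrier_mat d d" "\<i> \<cdot>\<^sub>m ?e b a \<in> carrier_mat d d" by auto
      have "E (rk1 d w) = E (?e a a + ?e b b + (-\<i>) \<cdot>\<^sub>m ?e a b) + E (\<i> \<cdot>\<^sub>m ?e b a)"
        unfolding rw using lin_add[OF lin c2 c3(2)] .
      also have "E (?e a a + ?e b b + (-\<i>) \<cdot>\<^sub>m ?e a b) = E (?e a a + ?e b b) + E ((-\<i>) \<cdot>\<^sub>m ?e a b)"
        using lin_add[OF lin c1 c3(1)] .
      also have "E (?e a a + ?e b b) = G" unfolding G_def using lin_add[OF lin matrix_unit_carrier matrix_unit_carrier] .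
      also have "E ((-\<i>) \<cdot>\<^sub>m ?e a b) = (-\<i>) \<cdot>\<^sub>m E (?e a b)" using lin_smult[OF lin matrix_unit_carrier] .
      also have "E (\<i> \<cdot>\<^sub>m ?e b a) = \<i> \<cdot>\<^sub>m E (?e b a)" using lin_smult[OF lin matrix_unit_carrier] .
      finally show ?thesis .
    qed
    have pv: "psd d (E (rk1 d v))" using CP_psd[OF cp lin rk1_psd[OF v]] .
    have pw: "psd d (E (rk1 d w))" using CP_psd[OF cp lin rk1_psd[OF w]] .
    have h1: "cnj (G $$ (j,i)) + cnj (E (?e a b) $$ (j,i)) + cnj (E (?e b a) $$ (j,i))
        = G $$ (i,j) + E (?e a b) $$ (i,j) + E (?e b a) $$ (i,j)"
      using psd_herm_entry[OF pv i j] unfolding Ev using i j Gc dims by simp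
    have h2: "cnj (G $$ (j,i)) + \<i> * cnj (E (?e a b) $$ (j,i)) - \<i> * cnj (E (?e b a) $$ (j,i))
        = G $$ (i,j) - \<i> * E (?e a b) $$ (i,j) + \<i> * E (?e b a) $$ (i,j)"
      using psd_herm_entry[OF pw i j] unfolding Ew using i j Gc dims by simp
    define x where "x = cnj (E (?e a b) $$ (j,i))"
    define y where "y = cnj (E (?e b a) $$ (j,i))"
    define x' where "x' = E (?e a b) $$ (i,j)"
    define y' where "y' = E (?e b a) $$ (i,j)"
    have s1: "x + y = x' + y'" using h1 Gh unfolding x_def y_def x'_def y'_def by simp
    have s2: "\<i> * (x - y) = \<i> * (y' - x')" using h2 Gh unfolding x_def y_def x'_def y'_def
      by (simp add: algebra_simps)
    then have s3: "x - y = y' - x'" by simp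
    have "2 * x = (x + y) + (x - y)" by simp
    also have "\<dots> = (x' + y') + (y' - x')" unfolding s1 s3 ..
    also have "\<dots> = 2 * y'" by simp
    finally have "x = y'" by simp
    then show ?thesis unfolding x_def y'_def .
  qed
qed

lemma E_adj: assumes cp: "completely_positive d E" and lin: "linear_on_Md d E" and Y: "Y \<in> carrier_mat d d"
  shows "E (adj Y) = adj (E Y)"
proof -
  have Ya: "adj Y \<in> carrier_mat d d" using Y by simp
  have EY: "E Y \<in> carrier_mat d d" using lin_carrier[OF lin Y] .
  have EYa: "E (adj Y) \<in> carrier_mat d d" using lin_carrier[OF lin Ya] .
  show ?thesis
  proof (rule eq_matI)
    fix i j assume "i < dim_row (adj (E Y))" "j < dim_col (adj (E Y))"
    then have i: "i < d" and j: "j < d" using EY by auto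
    have "E (adj Y) $$ (i,j) = (\<Sum>a<d. \<Sum>b<d. adj Y $$ (a,b) * E (matrix_unit d a b) $$ (i,j))"
      using lin_expand[OF lin Ya i j] .
    also have "\<dots> = (\<Sum>a<d. \<Sum>b<d. cnj (Y $$ (b,a)) * E (matrix_unit d a b) $$ (i,j))"
      using Y by (intro sum.cong refl) auto
    also have "\<dots> = (\<Sum>b<d. \<Sum>a<d. cnj (Y $$ (b,a)) * E (matrix_unit d a b) $$ (i,j))"
      by (rule sum.swap)
    also have "\<dots> = (\<Sum>b<d. \<Sum>a<d. cnj (Y $$ (b,a) * E (matrix_unit d b a) $$ (j,i)))"
      using herm_unit[OF cp lin _ _ i j] by (intro sum.cong refl) simp
    also have "\<dots> = cnj (\<Sum>a<d. \<Sum>b<d. Y $$ (a,b) * E (matrix_unit d a b) $$ (j,i))"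
      by (simp add: cnj_sum)
    also have "\<dots> = cnj (E Y $$ (j,i))" using lin_expand[OF lin Y j i] by simp
    also have "\<dots> = adj (E Y) $$ (i,j)" using EY i j by simp
    finally show "E (adj Y) $$ (i,j) = adj (E Y) $$ (i,j)" .
  qed (use EY EYa in auto)
qed

lemma iter_adj: assumes cp: "completely_positive d E" and lin: "linear_on_Md d E" and Y: "Y \<in> carrier_mat d d"
  shows "(E ^^ k) (adj Y) = adj ((E ^^ k) Y)"
proof (induction k)
  case 0 then show ?case by simp
next
  case (Suc k)
  have "(E ^^ k) Y \<in> carrier_mat d d" using lin_carrier[OF lin_iter[OF lin] Y] .
  then show ?case using Suc E_adj[OF cp lin] by simp
qed

lemma adj_unit: "adj (matrix_unit d a b) = matrix_unit d b a"
  by (rule eq_matI) (auto simp: matrix_unit_def)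

lemma op_trace_real: assumes cp: "completely_positive d E" and lin: "linear_on_Md d E"
  shows "Im (op_trace d (E ^^ L)) = 0"
proof -
  let ?F = "E ^^ L"
  have Fc: "\<And>a b. ?F (matrix_unit d a b) \<in> carrier_mat d d"
    using lin_carrier[OF lin_iter[OF lin] matrix_unit_carrier] .
  have "cnj (op_trace d ?F) = (\<Sum>a<d. \<Sum>b<d. cnj (?F (matrix_unit d a b) $$ (a,b)))"
    unfolding op_trace_def by (simp add: cnj_sum)
  also have "\<dots> = (\<Sum>a<d. \<Sum>b<d. ?F (matrix_unit d b a) $$ (b,a))"
  proof (intro sum.cong refl)
    fix a b assume a: "a \<in> {..<d}" and b: "b \<in> {..<d}"
    have "cnj (?F (matrix_unit d a b) $$ (a,b)) = adj (?F (matrix_unit d a b)) $$ (b,a)"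
      using Fc[of a b] a b by simp
    also have "\<dots> = ?F (matrix_unit d b a) $$ (b,a)"
      using iter_adj[OF cp lin matrix_unit_carrier, of L a b] adj_unit by simp
    finally show "cnj (?F (matrix_unit d a b) $$ (a,b)) = ?F (matrix_unit d b a) $$ (b,a)" .
  qed
  also have "\<dots> = op_trace d ?F" unfolding op_trace_def by (rule sum.swap)
  finally have "cnj (op_trace d ?F) = op_trace d ?F" .
  then have "Im (cnj (op_trace d ?F)) = Im (op_trace d ?F)" by simp
  then show ?thesis by simp
qed

lemma hs_unit: assumes a: "a < d" and b: "b < d"
  shows "(\<Sum>i<d. \<Sum>k<d. (cmod (matrix_unit d a b $$ (k,i)))^2) = 1"
proof -
  have "(\<Sum>i<d. \<Sum>k<d. (cmod (matrix_unit d a b $$ (k,i)))^2) = (\<Sum>i<d. \<Sum>k<d. if i = b then (if k = a then 1 else 0) else (0::real))"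
    by (intro sum.cong refl) (auto simp: matrix_unit_index)
  also have "\<dots> = (\<Sum>i<d. if i = b then 1 else (0::real))"
    using a by (intro sum.cong refl) auto
  also have "\<dots> = 1" using b by simp
  finally show ?thesis .
qed

lemma hs_diag: assumes a: "a < d" and d: "d \<ge> 1"
  shows "(\<Sum>i<d. \<Sum>k<d. (cmod ((matrix_unit d a a - (1 / of_nat d) \<cdot>\<^sub>m 1\<^sub>m d) $$ (k,i)))^2) \<le> 1"
proof -
  define x :: real where "x = (1 - 1 / real d)^2"
  define y :: real where "y = (1 / real d)^2"
  have "(\<Sum>i<d. \<Sum>k<d. (cmod ((matrix_unit d a a - (1 / of_nat d) \<cdot>\<^sub>m 1\<^sub>m d) $$ (k,i)))^2)
      = (\<Sum>i<d. \<Sum>k<d. if k = i then (if i = a then x else y) else 0)"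
  proof (intro sum.cong refl)
    fix i k assume i: "i \<in> {..<d}" and k: "k \<in> {..<d}"
    show "(cmod ((matrix_unit d a a - (1 / of_nat d) \<cdot>\<^sub>m 1\<^sub>m d) $$ (k,i)))^2 = (if k = i then (if i = a then x else y) else 0)"
    proof (cases "k = i")
      case True
      show ?thesis
      proof (cases "i = a")
        case True
        have "(matrix_unit d a a - (1 / of_nat d) \<cdot>\<^sub>m 1\<^sub>m d) $$ (k,i) = complex_of_real (1 - 1 / real d)"
          using i k \<open>k = i\<close> True by (simp add: matrix_unit_index)
        then show ?thesis using \<open>k = i\<close> True unfolding x_def by (simp only: norm_of_real) (simp add: power2_abs)
      next
        case False
        have "(matrix_unit d a a - (1 / of_nat d) \<cdot>\<^sub>m 1\<^sub>m d) $$ (k,i) = complex_of_real (- (1 / real d))"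
          using i k \<open>k = i\<close> False by (simp add: matrix_unit_index)
        then show ?thesis using \<open>k = i\<close> False unfolding y_def by (simp only: norm_of_real) (simp add: power2_abs)
      qed
    next
      case False
      then show ?thesis using i k by (simp add: matrix_unit_index)
    qed
  qed
  also have "\<dots> = (\<Sum>i<d. if i = a then x else y)" by simp
  also have "\<dots> = (\<Sum>i<d. y + (if i = a then x - y else 0))" by (intro sum.cong refl) auto
  also have "\<dots> = real d * y + (x - y)" using a by (simp add: sum.distrib)
  also have "\<dots> = 1 - 1 / real d" unfolding x_def y_def using d
    by (simp add: power2_eq_square field_simps)
  also have "\<dots> \<le> 1" by simp
  finally show ?thesis .
qed

theorem mainTheorem16:
  fixes E :: "complex mat \<Rightarrow> complex mat" and d L :: nat
  assumes "d \<ge> 1" and "L \<ge> 1" and "CPTP d E"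
  shows "Im (op_trace d (E ^^ L)) = 0 \<and>
    1 - real d powr (5/2) * ergodicity_coeff d E ^ L \<le> Re (op_trace d (E ^^ L)) \<and>
    Re (op_trace d (E ^^ L)) \<le> 1 + real d powr (5/2) * ergodicity_coeff d E ^ L"
proof -
  have lin: "linear_on_Md d E" and cp: "completely_positive d E" and tp: "trace_preserving d E"
    using assms(3) unfolding CPTP_def by auto
  define F where "F = E ^^ L"
  define \<tau> where "\<tau> = ergodicity_coeff d E"
  have linF: "linear_on_Md d F" unfolding F_def using lin_iter[OF lin] .
  have tpF: "trace_preserving d F" unfolding F_def using tp_iter[OF lin tp] .
  have tau0: "\<tau> \<ge> 0" unfolding \<tau>_def using tau_nonneg[OF lin tp] .
  have im: "Im (op_trace d F) = 0" unfolding F_def using op_trace_real[OF cp lin] .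
  define \<rho> where "\<rho> = (1 / of_nat d :: complex) \<cdot>\<^sub>m 1\<^sub>m d"
  have \<rho>c: "\<rho> \<in> carrier_mat d d" unfolding \<rho>_def by simp
  have tr\<rho>: "cmat_trace \<rho> = 1" unfolding \<rho>_def using assms(1) by (simp add: cmat_trace_def)
  define \<sigma> where "\<sigma> a b = (if a = b then matrix_unit d a a - \<rho> else matrix_unit d a b)" for a b
  have \<sigma>c: "\<sigma> a b \<in> carrier_mat d d" for a b unfolding \<sigma>_def using \<rho>c by (auto intro: minus_carrier_mat)
  have trunit: "cmat_trace (matrix_unit d a b) = (if a = b then 1 else 0)" if "a < d" for a b
    unfolding cmat_trace_def using that by (simp add: matrix_unit_index)
  have \<sigma>t: "cmat_trace (\<sigma> a b) = 0" if a: "a < d" and b: "b < d" for a b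
  proof (cases "a = b")
    case True
    then show ?thesis unfolding \<sigma>_def using trace_minus[OF matrix_unit_carrier \<rho>c] trunit[OF a] tr\<rho> by simp
  next
    case False
    then show ?thesis unfolding \<sigma>_def using trunit[OF a] by simp
  qed
  have \<sigma>hs: "(\<Sum>i<d. \<Sum>k<d. (cmod (\<sigma> a b $$ (k,i)))^2) \<le> 1" if a: "a < d" and b: "b < d" for a b
    unfolding \<sigma>_def \<rho>_def using hs_unit[OF a b] hs_diag[OF a assms(1)] by auto
  have bound: "cmod (F (\<sigma> a b) $$ (a,b)) \<le> \<tau> ^ L * sqrt (real d)" if a: "a < d" and b: "b < d" for a b
  proof -
    have Fs: "F (\<sigma> a b) \<in> carrier_mat d d" using lin_carrier[OF linF \<sigma>c] .
    have "cmod (F (\<sigma> a b) $$ (a,b)) \<le> trace_norm (F (\<sigma> a b))" using tn_entry[OF Fs a b] .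
    also have "\<dots> \<le> \<tau> ^ L * trace_norm (\<sigma> a b)" unfolding F_def \<tau>_def
      using tau_iter[OF lin tp \<sigma>c \<sigma>t[OF a b]] .
    also have "\<dots> \<le> \<tau> ^ L * (sqrt (real d) * sqrt (\<Sum>i<d. \<Sum>k<d. (cmod (\<sigma> a b $$ (k,i)))^2))"
      using tn_hs[OF \<sigma>c] tau0 by (simp add: mult_left_mono)
    also have "\<dots> \<le> \<tau> ^ L * (sqrt (real d) * 1)"
      using \<sigma>hs[OF a b] tau0 by (intro mult_left_mono) auto
    finally show ?thesis by simp
  qed
  have decomp: "F (matrix_unit d a b) $$ (a,b) = F (\<sigma> a b) $$ (a,b) + (if a = b then F \<rho> $$ (a,a) else 0)"
    if a: "a < d" and b: "b < d" for a b
  proof (cases "a = b")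
    case True
    have "matrix_unit d a a = (matrix_unit d a a - \<rho>) + \<rho>" using \<rho>c by (intro eq_matI) auto
    then have "F (matrix_unit d a a) = F (matrix_unit d a a - \<rho>) + F \<rho>"
      using lin_add[OF linF minus_carrier_mat[OF \<rho>c] \<rho>c] by metis
    moreover have "F \<rho> \<in> carrier_mat d d" using lin_carrier[OF linF \<rho>c] .
    ultimately show ?thesis unfolding \<sigma>_def using True a by simp
  next
    case False
    then show ?thesis unfolding \<sigma>_def by simp
  qed
  define err where "err = (\<Sum>a<d. \<Sum>b<d. F (\<sigma> a b) $$ (a,b))"
  have "op_trace d F = (\<Sum>a<d. \<Sum>b<d. F (\<sigma> a b) $$ (a,b) + (if a = b then F \<rho> $$ (a,a) else 0))"
    unfolding op_trace_def using decomp by (intro sum.cong refl) auto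
  also have "\<dots> = err + (\<Sum>a<d. F \<rho> $$ (a,a))" unfolding err_def by (simp add: sum.distrib)
  also have "(\<Sum>a<d. F \<rho> $$ (a,a)) = cmat_trace (F \<rho>)"
    unfolding cmat_trace_def using lin_carrier[OF linF \<rho>c] by simp
  also have "\<dots> = 1" using tpF \<rho>c tr\<rho> unfolding trace_preserving_def by simp
  finally have ot: "op_trace d F = err + 1" .
  have "cmod err \<le> (\<Sum>a<d. \<Sum>b<d. cmod (F (\<sigma> a b) $$ (a,b)))"
  proof -
    have "cmod err \<le> (\<Sum>a<d. cmod (\<Sum>b<d. F (\<sigma> a b) $$ (a,b)))" unfolding err_def by (rule norm_sum)
    also have "\<dots> \<le> (\<Sum>a<d. \<Sum>b<d. cmod (F (\<sigma> a b) $$ (a,b)))" by (intro sum_mono norm_sum)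
    finally show ?thesis .
  qed
  also have "\<dots> \<le> (\<Sum>a<d. \<Sum>b<d. \<tau> ^ L * sqrt (real d))" using bound by (intro sum_mono) auto
  also have "\<dots> = real d powr (5/2) * \<tau> ^ L"
  proof -
    have "real d powr (5/2) = real d powr (2 + 1/2)" by simp
    also have "\<dots> = real d powr 2 * real d powr (1/2)" by (rule powr_add)
    also have "\<dots> = real d * real d * sqrt (real d)" using assms(1) by (simp add: powr_half_sqrt power2_eq_square)
    finally show ?thesis by simp
  qed
  finally have ce: "cmod err \<le> real d powr (5/2) * \<tau> ^ L" .
  have "\<bar>Re err\<bar> \<le> real d powr (5/2) * \<tau> ^ L" using abs_Re_le_cmod[of err] ce by linarith
  then show ?thesis using ot im unfolding F_def \<tau>_def by auto
qed

end
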